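(* The partial functions $\Phi_\circ^{-1},\Phi_\bullet^{-1}:\mathrm{TXT}(\Delta)\to\mathrm{NW}(\Delta)$ (inverses of the injective maps $\Phi_\circ,\Phi_\bullet$, defined on their images) are unambiguously FO-definable (as transductions from text structures to nested-word structures).
   Context: Nested words: $\Delta$ finite alphabet. A nesting relation of width $n$ is a relation $\nu$ on $[n]$ with: $\nu(i,j)\Rightarrow i<j$; $\nu(i,j),\nu(i,j')\Rightarrow j=j'$ and $\nu(i,j),\nu(i',j)\Rightarrow i=i'$; $\nu(i,j),\nu(i',j'),i<i'\Rightarrow j<i'$ or $j'<j$. A nested word is $(w,\nu)$ with $w=a_1\cdots a_n\in\Delta^+$ and $\nu$ of width $n$; $\mathrm{NW}(\Delta)$ is their set, viewed as structures with domain $[n]$, unary $\mathrm{Lab}_a=\{i:a_i=a\}$, natural order $\le$, binary $\nu$. Factor $nw[i,j]=(a_i\cdots a_j,\{(k-i+1,\ell-i+1):(k,\ell)\in\nu,i\le k,\ell\le j\})$. Texts: a text is $(V,\lambda,\le_1,\le_2)$, $V$ finite nonempty, $\lambda:V\to\Delta$, $\le_1,\le_2$ linear orders, up to isomorphism, viewed as a structure with $\mathrm{Lab}_a$, $\le_1$, $\le_2$. $\tau\circ\tau'$ (resp. $\tau\bullet\tau'$) is the disjoint union with all of $\tau$ before $\tau'$ in $\le_1$, and in $\le_2$ all of $\tau$ before $\tau'$ (resp. all of $\tau'$ before $\tau$). $\mathrm{TXT}(\Delta)$ is the set of texts generated from singletons by $\circ,\bullet$. $\Phi_\circ,\Phi_\bullet:\mathrm{NW}(\Delta)\to\mathrm{TXT}(\Delta)$: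 if $\nu=\emptyset$, $\Phi_\circ(nw)=a_1\circ\cdots\circ a_n$, $\Phi_\bullet(nw)=a_1\bullet\cdots\bullet a_n$; otherwise with $i$ the least call, $j$ its return, $nw'=nw[i+1,j-1]$, $nw''=nw[j+1,n]$: $\Phi_\circ(nw)=a_1\circ\cdots\circ a_{i-1}\circ(a_i\bullet\Phi_\bullet(nw')\bullet a_j)\circ\Phi_\circ(nw'')$, $\Phi_\bullet(nw)=a_1\bullet\cdots\bullet a_{i-1}\bullet(a_i\circ\Phi_\circ(nw')\circ a_j)\bullet\Phi_\bullet(nw'')$, omitting factors for empty intervals. Definability: for signatures $\sigma_1$, $\sigma_2=(R_i)_{i\in I}$, a 1-copying definition scheme with parameters $X_1..X_n$ is $\mathcal D=(\theta,\delta,(\varphi_i)_{i\in I})$ of classical MSO($\sigma_1$) formulas with free variables among $\{X_1..X_n\}$, $\{x_1,X_1..X_n\}$, $\{x_1..x_{\rho(R_i)},X_1..X_n\}$. For $s_1$, $\bar T$ with $s_1\models\theta[\bar T]$, $\mathrm{def}_{\mathcal D}(s_1,\bar T)$ has domain $\{v:s_1\models\delta[v,\bar T]\}$ and $R_i=\{\bar v:s_1\models\varphi_i[\bar v,\bar T]\}$ within it. $\mathrm{def}_{\mathcal D}$ relates $s_1$ to all such structures; $\mathcal D$ is unambiguous if each related pair arises from at most one $\bar T$. A partial function is unambiguously FO-definable if it equals $\mathrm{def}_{\mathcal D}$ for an unambiguous $\mathcal D$ of first-order formulas. *)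

theory Defs
  imports Main
begin

record ('v, 'r) str =
  sdom :: "'v set"
  srel :: "'r \<Rightarrow> 'v list set"

definition wf_str :: "('r \<Rightarrow> nat) \<Rightarrow> ('v, 'r) str \<Rightarrow> bool" where
  "wf_str ar s \<longleftrightarrow> finite (sdom s) \<and>
     (\<forall>R. \<forall>vs \<in> srel s R. length vs = ar R \<and> set vs \<subseteq> sdom s)"

definition iso_str :: "('v, 'r) str \<Rightarrow> ('w, 'r) str \<Rightarrow> bool" where
  "iso_str A B \<longleftrightarrow> (\<exists>f. bij_betw f (sdom A) (sdom B) \<and>
      (\<forall>R. srel B R = map f ` srel A R))"

datatype 'r mso =
    Rel 'r "nat list"
  | Eq nat nat
  | Mem nat nat
  | Neg "'r mso"
  | Conj "'r mso" "'r mso"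
  | Ex1 nat "'r mso"
  | Ex2 nat "'r mso"

fun sat :: "('v, 'r) str \<Rightarrow> (nat \<Rightarrow> 'v) \<Rightarrow> (nat \<Rightarrow> 'v set) \<Rightarrow> 'r mso \<Rightarrow> bool" where
  "sat s fo so (Rel R xs) = (map fo xs \<in> srel s R)"
| "sat s fo so (Eq x y) = (fo x = fo y)"
| "sat s fo so (Mem x X) = (fo x \<in> so X)"
| "sat s fo so (Neg \<phi>) = (\<not> sat s fo so \<phi>)"
| "sat s fo so (Conj \<phi> \<psi>) = (sat s fo so \<phi> \<and> sat s fo so \<psi>)"
| "sat s fo so (Ex1 x \<phi>) = (\<exists>v \<in> sdom s. sat s (fo(x := v)) so \<phi>)"
| "sat s fo so (Ex2 X \<phi>) = (\<exists>V. V \<subseteq> sdom s \<and> sat s fo (so(X := V)) \<phi>)"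

fun fv1 :: "'r mso \<Rightarrow> nat set" where
  "fv1 (Rel R xs) = set xs"
| "fv1 (Eq x y) = {x, y}"
| "fv1 (Mem x X) = {x}"
| "fv1 (Neg \<phi>) = fv1 \<phi>"
| "fv1 (Conj \<phi> \<psi>) = fv1 \<phi> \<union> fv1 \<psi>"
| "fv1 (Ex1 x \<phi>) = fv1 \<phi> - {x}"
| "fv1 (Ex2 X \<phi>) = fv1 \<phi>"

fun fv2 :: "'r mso \<Rightarrow> nat set" where
  "fv2 (Rel R xs) = {}"
| "fv2 (Eq x y) = {}"
| "fv2 (Mem x X) = {X}"
| "fv2 (Neg \<phi>) = fv2 \<phi>"
| "fv2 (Conj \<phi> \<psi>) = fv2 \<phi> \<union> fv2 \<psi>"
| "fv2 (Ex1 x \<phi>) = fv2 \<phi>"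
| "fv2 (Ex2 X \<phi>) = fv2 \<phi> - {X}"

text \<open>First-order formulas: no set quantifiers (free set variables, i.e. parameters, allowed).\<close>
fun is_FO :: "'r mso \<Rightarrow> bool" where
  "is_FO (Rel R xs) = True"
| "is_FO (Eq x y) = True"
| "is_FO (Mem x X) = True"
| "is_FO (Neg \<phi>) = is_FO \<phi>"
| "is_FO (Conj \<phi> \<psi>) = (is_FO \<phi> \<and> is_FO \<psi>)"
| "is_FO (Ex1 x \<phi>) = is_FO \<phi>"
| "is_FO (Ex2 X \<phi>) = False"

text \<open>Parameters X_1..X_n are the set variables 0..<n; the first-order variables
x_1,...,x_k are the variables 0..<k.\<close>
record ('r1, 'r2) defscheme =
  nparams :: nat
  dtheta :: "'r1 mso"
  ddelta :: "'r1 mso"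
  dphi :: "'r2 \<Rightarrow> 'r1 mso"

definition wf_scheme :: "('r2 \<Rightarrow> nat) \<Rightarrow> ('r1, 'r2) defscheme \<Rightarrow> bool" where
  "wf_scheme ar2 D \<longleftrightarrow>
     fv1 (dtheta D) = {} \<and> fv2 (dtheta D) \<subseteq> {..<nparams D} \<and>
     fv1 (ddelta D) \<subseteq> {0} \<and> fv2 (ddelta D) \<subseteq> {..<nparams D} \<and>
     (\<forall>R. fv1 (dphi D R) \<subseteq> {..<ar2 R} \<and> fv2 (dphi D R) \<subseteq> {..<nparams D})"

definition FO_scheme :: "('r1, 'r2) defscheme \<Rightarrow> bool" where
  "FO_scheme D \<longleftrightarrow> is_FO (dtheta D) \<and> is_FO (ddelta D) \<and> (\<forall>R. is_FO (dphi D R))"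

definition par_asg :: "'v set list \<Rightarrow> nat \<Rightarrow> 'v set" where
  "par_asg Ts = (\<lambda>i. if i < length Ts then Ts ! i else {})"

definition params_ok :: "('r1, 'r2) defscheme \<Rightarrow> ('v, 'r1) str \<Rightarrow> 'v set list \<Rightarrow> bool" where
  "params_ok D s Ts \<longleftrightarrow> length Ts = nparams D \<and> (\<forall>T \<in> set Ts. T \<subseteq> sdom s) \<and>
     sat s (\<lambda>_. undefined) (par_asg Ts) (dtheta D)"

definition def_str :: "('r2 \<Rightarrow> nat) \<Rightarrow> ('r1, 'r2) defscheme \<Rightarrow> ('v, 'r1) str \<Rightarrow> 'v set list
    \<Rightarrow> ('v, 'r2) str" where
  "def_str ar2 D s Ts =
    (let V = {v \<in> sdom s. sat s (\<lambda>_. v) (par_asg Ts) (ddelta D)} in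
     \<lparr> sdom = V,
       srel = (\<lambda>R. {vs. length vs = ar2 R \<and> set vs \<subseteq> V \<and>
                        sat s (\<lambda>i. vs ! i) (par_asg Ts) (dphi D R)}) \<rparr>)"

definition def_rel :: "('r2 \<Rightarrow> nat) \<Rightarrow> ('r1, 'r2) defscheme \<Rightarrow> ('v, 'r1) str
    \<Rightarrow> ('v, 'r2) str \<Rightarrow> bool" where
  "def_rel ar2 D s1 s2 \<longleftrightarrow> (\<exists>Ts. params_ok D s1 Ts \<and> s2 = def_str ar2 D s1 Ts)"

text \<open>Unambiguity: every related pair arises from at most one parameter tuple
(quantified over all finite well-formed source structures, here with domain in nat).\<close>
definition unambiguous :: "('r1 \<Rightarrow> nat) \<Rightarrow> ('r2 \<Rightarrow> nat) \<Rightarrow> ('r1, 'r2) defscheme \<Rightarrow> bool" where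
  "unambiguous ar1 ar2 D \<longleftrightarrow>
     (\<forall>(s :: (nat, 'r1) str) Ts Ts'. wf_str ar1 s \<longrightarrow> params_ok D s Ts \<longrightarrow> params_ok D s Ts' \<longrightarrow>
        def_str ar2 D s Ts = def_str ar2 D s Ts' \<longrightarrow> Ts = Ts')"

definition nesting_rel :: "nat \<Rightarrow> (nat \<times> nat) set \<Rightarrow> bool" where
  "nesting_rel n \<nu> \<longleftrightarrow> \<nu> \<subseteq> {1..n} \<times> {1..n} \<and>
     (\<forall>i j. (i, j) \<in> \<nu> \<longrightarrow> i < j) \<and>
     (\<forall>i j j'. (i, j) \<in> \<nu> \<longrightarrow> (i, j') \<in> \<nu> \<longrightarrow> j = j') \<and>
     (\<forall>i i' j. (i, j) \<in> \<nu> \<longrightarrow> (i', j) \<in> \<nu> \<longrightarrow> i = i') \<and>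
     (\<forall>i j i' j'. (i, j) \<in> \<nu> \<longrightarrow> (i', j') \<in> \<nu> \<longrightarrow> i < i' \<longrightarrow> j < i' \<or> j' < j)"

text \<open>A nested word (w, nu): w = a_1...a_n nonempty, positions 1..n (a_i = w ! (i-1)).\<close>
definition is_nw :: "'a list \<Rightarrow> (nat \<times> nat) set \<Rightarrow> bool" where
  "is_nw w \<nu> \<longleftrightarrow> w \<noteq> [] \<and> nesting_rel (length w) \<nu>"

datatype 'a nw_sym = NLab 'a | NLe | NNu

fun nw_ar :: "'a nw_sym \<Rightarrow> nat" where
  "nw_ar (NLab a) = 1" | "nw_ar NLe = 2" | "nw_ar NNu = 2"

definition nw_struct :: "'a list \<Rightarrow> (nat \<times> nat) set \<Rightarrow> (nat, 'a nw_sym) str" where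
  "nw_struct w \<nu> =
    \<lparr> sdom = {1..length w},
      srel = (\<lambda>R. case R of
          NLab a \<Rightarrow> {[i] | i. 1 \<le> i \<and> i \<le> length w \<and> w ! (i - 1) = a}
        | NLe \<Rightarrow> {[i, j] | i j. 1 \<le> i \<and> i \<le> j \<and> j \<le> length w}
        | NNu \<Rightarrow> {[i, j] | i j. (i, j) \<in> \<nu>}) \<rparr>"

definition fword :: "'a list \<Rightarrow> nat \<Rightarrow> nat \<Rightarrow> 'a list" where
  "fword w i j = take (Suc j - i) (drop (i - 1) w)"

definition frel :: "(nat \<times> nat) set \<Rightarrow> nat \<Rightarrow> nat \<Rightarrow> (nat \<times> nat) set" where
  "frel \<nu> i j = {(k + 1 - i, l + 1 - i) | k l. (k, l) \<in> \<nu> \<and> i \<le> k \<and> l \<le> j}"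

text \<open>Terms built from singletons by the two text operations: TSer = \<open>\<circ>\<close>, TPar = \<open>\<bullet>\<close>.\<close>
datatype 'a txt_term = TSing 'a | TSer "'a txt_term" "'a txt_term" | TPar "'a txt_term" "'a txt_term"

fun leaves :: "'a txt_term \<Rightarrow> 'a list" where
  "leaves (TSing a) = [a]"
| "leaves (TSer s t) = leaves s @ leaves t"
| "leaves (TPar s t) = leaves s @ leaves t"

text \<open>Positions (0-based, in the first order) listed in increasing second order.\<close>
fun ord2 :: "'a txt_term \<Rightarrow> nat list" where
  "ord2 (TSing a) = [0]"
| "ord2 (TSer s t) = ord2 s @ map (\<lambda>i. i + length (leaves s)) (ord2 t)"
| "ord2 (TPar s t) = map (\<lambda>i. i + length (leaves s)) (ord2 t) @ ord2 s"

datatype 'a txt_sym = TLab 'a | Ord1 | Ord2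

fun txt_ar :: "'a txt_sym \<Rightarrow> nat" where
  "txt_ar (TLab a) = 1" | "txt_ar Ord1 = 2" | "txt_ar Ord2 = 2"

definition text_of :: "'a txt_term \<Rightarrow> (nat, 'a txt_sym) str" where
  "text_of t =
    (let n = length (leaves t) in
     \<lparr> sdom = {0..<n},
       srel = (\<lambda>R. case R of
           TLab a \<Rightarrow> {[i] | i. i < n \<and> leaves t ! i = a}
         | Ord1 \<Rightarrow> {[i, j] | i j. i \<le> j \<and> j < n}
         | Ord2 \<Rightarrow> {[ord2 t ! p, ord2 t ! q] | p q. p \<le> q \<and> q < n}) \<rparr>)"

definition TXT :: "('v, 'a txt_sym) str set" where
  "TXT = {s. \<exists>t. iso_str (text_of t) s}"

section \<open>The maps Phi_circ (c = True) and Phi_bullet (c = False)\<close>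

fun comb :: "bool \<Rightarrow> 'a txt_term list \<Rightarrow> 'a txt_term" where
  "comb c [] = undefined"
| "comb c [t] = t"
| "comb c (t # ts) = (if c then TSer t (comb c ts) else TPar t (comb c ts))"

text \<open>List of the top-level factors of Phi_c(nw) (empty for the empty word); the natural-number
argument is recursion fuel, and length w fuel always suffices since the recursive calls are on
strictly shorter factors.\<close>
fun phil :: "nat \<Rightarrow> bool \<Rightarrow> 'a list \<Rightarrow> (nat \<times> nat) set \<Rightarrow> 'a txt_term list" where
  "phil 0 c w \<nu> = map TSing w"
| "phil (Suc f) c w \<nu> =
    (if \<nu> = {} then map TSing w
     else (let i = (LEAST i. \<exists>j. (i, j) \<in> \<nu>);
               j = (THE j. (i, j) \<in> \<nu>);
               n = length w
           in map TSing (take (i - 1) w) @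
              [comb (\<not> c) ([TSing (w ! (i - 1))] @
                     phil f (\<not> c) (fword w (i + 1) (j - 1)) (frel \<nu> (i + 1) (j - 1)) @
                     [TSing (w ! (j - 1))])] @
              phil f c (fword w (j + 1) n) (frel \<nu> (j + 1) n)))"

definition Phi :: "bool \<Rightarrow> 'a list \<Rightarrow> (nat \<times> nat) set \<Rightarrow> 'a txt_term" where
  "Phi c w \<nu> = comb c (phil (length w) c w \<nu>)"

end

theory Submission
  imports Defs
begin



fun sw :: "'a txt_term \<Rightarrow> nat \<Rightarrow> nat \<Rightarrow> bool" where
  "sw (TSing a) x y = False"
| "sw (TSer s u) x y = (if y < length (leaves s) then sw s x y
     else if length (leaves s) \<le> x then sw u (x - length (leaves s)) (y - length (leaves s)) else False)"
| "sw (TPar s u) x y = (if y < length (leaves s) then sw s x y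
     else if length (leaves s) \<le> x then sw u (x - length (leaves s)) (y - length (leaves s)) else True)"

fun rk :: "'a txt_term \<Rightarrow> nat \<Rightarrow> nat" where
  "rk (TSing a) x = 0"
| "rk (TSer s u) x = (if x < length (leaves s) then rk s x else length (leaves s) + rk u (x - length (leaves s)))"
| "rk (TPar s u) x = (if x < length (leaves s) then length (leaves u) + rk s x else rk u (x - length (leaves s)))"

lemma len_ord2: "length (ord2 t) = length (leaves t)"
  by (induction t) auto

lemma leaves_ne: "leaves t \<noteq> []"
  by (induction t) auto

lemma ord2_rk: "x < length (leaves t) \<Longrightarrow> ord2 t ! rk t x = x \<and> rk t x < length (leaves t)"
proof (induction t arbitrary: x)
  case (TSing a) then show ?case by simp
next
  case (TSer s u)
  show ?case
  proof (cases "x < length (leaves s)")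
    case True then show ?thesis using TSer.IH(1)[of x] by (auto simp: nth_append len_ord2)
  next
    case False
    then have "x - length (leaves s) < length (leaves u)" using TSer.prems by simp
    then have h: "ord2 u ! rk u (x - length (leaves s)) = x - length (leaves s) \<and> rk u (x - length (leaves s)) < length (leaves u)"
      using TSer.IH(2) by blast
    show ?thesis using False h by (auto simp: nth_append len_ord2)
  qed
next
  case (TPar s u)
  show ?case
  proof (cases "x < length (leaves s)")
    case True then show ?thesis using TPar.IH(1)[of x] by (auto simp: nth_append len_ord2)
  next
    case False
    then have "x - length (leaves s) < length (leaves u)" using TPar.prems by simp
    then have h: "ord2 u ! rk u (x - length (leaves s)) = x - length (leaves s) \<and> rk u (x - length (leaves s)) < length (leaves u)"
      using TPar.IH(2) by blast
    show ?thesis using False h by (auto simp: nth_append len_ord2)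
  qed
qed

lemma rk_ord2: "p < length (leaves t) \<Longrightarrow> rk t (ord2 t ! p) = p \<and> ord2 t ! p < length (leaves t)"
proof (induction t arbitrary: p)
  case (TSing a) then show ?case by simp
next
  case (TSer s u)
  show ?case
  proof (cases "p < length (leaves s)")
    case True then show ?thesis using TSer.IH(1)[of p] by (auto simp: nth_append len_ord2)
  next
    case False
    then have "p - length (leaves s) < length (leaves u)" using TSer.prems by simp
    then have h: "rk u (ord2 u ! (p - length (leaves s))) = p - length (leaves s) \<and> ord2 u ! (p - length (leaves s)) < length (leaves u)"
      using TSer.IH(2) by blast
    show ?thesis using False h \<open>p - length (leaves s) < length (leaves u)\<close> by (auto simp: nth_append len_ord2)
  qed
next
  case (TPar s u)
  show ?case
  proof (cases "p < length (leaves u)")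
    case True then show ?thesis using TPar.IH(2)[of p] TPar.prems by (auto simp: nth_append len_ord2)
  next
    case False
    then have "p - length (leaves u) < length (leaves s)" using TPar.prems by simp
    then have h: "rk s (ord2 s ! (p - length (leaves u))) = p - length (leaves u) \<and> ord2 s ! (p - length (leaves u)) < length (leaves s)"
      using TPar.IH(1) by blast
    show ?thesis using False h by (auto simp: nth_append len_ord2)
  qed
qed

lemma rk_inj: "a < length (leaves t) \<Longrightarrow> b < length (leaves t) \<Longrightarrow> rk t a = rk t b \<Longrightarrow> a = b"
  by (metis ord2_rk)

lemma sw_rk: "x < y \<Longrightarrow> y < length (leaves t) \<Longrightarrow> sw t x y = (rk t y < rk t x)"
proof (induction t arbitrary: x y)
  case (TSing a) then show ?case by simp
next
  case (TSer s u)
  show ?case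
  proof (cases "y < length (leaves s)")
    case True then show ?thesis using TSer by simp
  next
    case False
    then have "y - length (leaves s) < length (leaves u)" using TSer.prems by simp
    then have h: "rk u (y - length (leaves s)) < length (leaves u)" using ord2_rk by blast
    show ?thesis
    proof (cases "length (leaves s) \<le> x")
      case True then show ?thesis using False TSer by auto
    next
      case F2: False
      then have "rk s x < length (leaves s)" using ord2_rk[of x s] by simp
      then show ?thesis using False F2 by auto
    qed
  qed
next
  case (TPar s u)
  show ?case
  proof (cases "y < length (leaves s)")
    case True then show ?thesis using TPar by simp
  next
    case False
    then have "y - length (leaves s) < length (leaves u)" using TPar.prems by simp
    then have h: "rk u (y - length (leaves s)) < length (leaves u)" using ord2_rk by blast
    show ?thesis
    proof (cases "length (leaves s) \<le> x")
      case True then show ?thesis using False TPar by auto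
    next
      case F2: False
      then show ?thesis using False F2 h by auto
    qed
  qed
qed

lemma text_of_simps:
  "sdom (text_of t) = {0..<length (leaves t)}"
  "srel (text_of t) (TLab a) = {[i] | i. i < length (leaves t) \<and> leaves t ! i = a}"
  "srel (text_of t) Ord1 = {[i, j] | i j. i \<le> j \<and> j < length (leaves t)}"
  by (simp_all add: text_of_def Let_def)

lemma Ord2_iff: "[a, b] \<in> srel (text_of t) Ord2 \<longleftrightarrow>
   a < length (leaves t) \<and> b < length (leaves t) \<and> rk t a \<le> rk t b"
proof
  assume "[a, b] \<in> srel (text_of t) Ord2"
  then obtain p q where "a = ord2 t ! p" "b = ord2 t ! q" "p \<le> q" "q < length (leaves t)"
    by (auto simp: text_of_def Let_def)
  then show "a < length (leaves t) \<and> b < length (leaves t) \<and> rk t a \<le> rk t b"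
    using rk_ord2[of p t] rk_ord2[of q t] by auto
next
  assume H: "a < length (leaves t) \<and> b < length (leaves t) \<and> rk t a \<le> rk t b"
  then have "[a, b] = [ord2 t ! rk t a, ord2 t ! rk t b]" using ord2_rk by metis
  moreover have "rk t b < length (leaves t)" using H ord2_rk by blast
  ultimately show "[a, b] \<in> srel (text_of t) Ord2" using H
    by (auto simp: text_of_def Let_def)
qed

lemma Ord2_mem: "vs \<in> srel (text_of t) Ord2 \<Longrightarrow> \<exists>a b. vs = [a, b]"
  by (auto simp: text_of_def Let_def)

lemma Ord2_sw: "x < y \<Longrightarrow> y < length (leaves t) \<Longrightarrow> ([y, x] \<in> srel (text_of t) Ord2) = sw t x y"
  using Ord2_iff[of y x t] sw_rk[of x y t] rk_inj[of x t y] by auto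

lemma text_of_eq:
  assumes "leaves t1 = leaves t2"
    and "\<And>x y. x < y \<Longrightarrow> y < length (leaves t1) \<Longrightarrow> sw t1 x y = sw t2 x y"
  shows "text_of t1 = text_of t2"
proof -
  have "srel (text_of t1) Ord2 = srel (text_of t2) Ord2"
  proof (rule set_eqI)
    fix vs
    show "vs \<in> srel (text_of t1) Ord2 \<longleftrightarrow> vs \<in> srel (text_of t2) Ord2"
    proof
      assume "vs \<in> srel (text_of t1) Ord2"
      then obtain a b where vs: "vs = [a, b]" using Ord2_mem by blast
      have "a < length (leaves t1) \<and> b < length (leaves t1) \<and> rk t1 a \<le> rk t1 b"
        using Ord2_iff \<open>vs \<in> _\<close> vs by metis
      moreover have "rk t2 a \<le> rk t2 b" 
        using calculation assms sw_rk[of a b t1] sw_rk[of a b t2] sw_rk[of b a t1] sw_rk[of b a t2] rk_inj[of a t1 b] rk_inj[of a t2 b]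
        by (cases a b rule: linorder_cases) auto
      ultimately show "vs \<in> srel (text_of t2) Ord2" using vs Ord2_iff assms(1) by metis
    next
      assume "vs \<in> srel (text_of t2) Ord2"
      then obtain a b where vs: "vs = [a, b]" using Ord2_mem by blast
      have "a < length (leaves t1) \<and> b < length (leaves t1) \<and> rk t2 a \<le> rk t2 b"
        using Ord2_iff \<open>vs \<in> _\<close> vs assms(1) by metis
      moreover have "rk t1 a \<le> rk t1 b" 
        using calculation assms sw_rk[of a b t1] sw_rk[of a b t2] sw_rk[of b a t1] sw_rk[of b a t2] rk_inj[of a t1 b] rk_inj[of a t2 b]
        by (cases a b rule: linorder_cases) auto
      ultimately show "vs \<in> srel (text_of t1) Ord2" using vs Ord2_iff by metis
    qed
  qed
  then show ?thesis using assms(1)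
    by (simp add: text_of_def Let_def)
qed

fun swL :: "bool \<Rightarrow> 'a txt_term list \<Rightarrow> nat \<Rightarrow> nat \<Rightarrow> bool" where
  "swL c [] x y = False"
| "swL c (t # L) x y = (if y < length (leaves t) then sw t x y
     else if length (leaves t) \<le> x then swL c L (x - length (leaves t)) (y - length (leaves t)) else \<not> c)"

abbreviation lvs :: "'a txt_term list \<Rightarrow> 'a list" where "lvs L \<equiv> concat (map leaves L)"

lemma swL_append: "swL c (A @ B) x y = (if y < length (lvs A) then swL c A x y
   else if length (lvs A) \<le> x then swL c B (x - length (lvs A)) (y - length (lvs A)) else \<not> c)"
  by (induction A arbitrary: x y) (auto simp: diff_diff_add)

lemma comb_leaves: "L \<noteq> [] \<Longrightarrow> leaves (comb c L) = lvs L"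
proof (induction L)
  case Nil then show ?case by simp
next
  case (Cons t L) then show ?case by (cases L) auto
qed

lemma comb_sw: "L \<noteq> [] \<Longrightarrow> y < length (lvs L) \<Longrightarrow> sw (comb c L) x y = swL c L x y"
proof (induction L arbitrary: x y)
  case Nil then show ?case by simp
next
  case (Cons t L) then show ?case by (cases L) (auto simp: comb_leaves)
qed

lemma swL_sing: "x < y \<Longrightarrow> y < length u \<Longrightarrow> swL c (map TSing u) x y = (\<not> c)"
  by (induction u arbitrary: x y) (auto)




definition ecount :: "(nat \<times> nat) set \<Rightarrow> nat \<Rightarrow> nat \<Rightarrow> nat" where
  "ecount \<nu> X Y = card {p \<in> \<nu>. fst p \<le> X \<and> Y \<le> snd p}"

lemma nr_range: "nesting_rel n \<nu> \<Longrightarrow> (k, l) \<in> \<nu> \<Longrightarrow> 1 \<le> k \<and> k \<le> n \<and> 1 \<le> l \<and> l \<le> n"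
  unfolding nesting_rel_def by auto
lemma nr_lt: "nesting_rel n \<nu> \<Longrightarrow> (k, l) \<in> \<nu> \<Longrightarrow> k < l"
  unfolding nesting_rel_def by auto
lemma nr_fun: "nesting_rel n \<nu> \<Longrightarrow> (k, l) \<in> \<nu> \<Longrightarrow> (k, l') \<in> \<nu> \<Longrightarrow> l = l'"
  unfolding nesting_rel_def by blast
lemma nr_inj: "nesting_rel n \<nu> \<Longrightarrow> (k, l) \<in> \<nu> \<Longrightarrow> (k', l) \<in> \<nu> \<Longrightarrow> k = k'"
  unfolding nesting_rel_def by blast
lemma nr_nest: "nesting_rel n \<nu> \<Longrightarrow> (k, l) \<in> \<nu> \<Longrightarrow> (k', l') \<in> \<nu> \<Longrightarrow> k < k' \<Longrightarrow> l < k' \<or> l' < l"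
  unfolding nesting_rel_def by blast
lemma nr_finite: "nesting_rel n \<nu> \<Longrightarrow> finite \<nu>"
  unfolding nesting_rel_def by (auto intro: finite_subset)

lemma fword_len: "1 \<le> a \<Longrightarrow> b \<le> length w \<Longrightarrow> length (fword w a b) = Suc b - a"
  by (simp add: fword_def)

lemma frel_eq: "frel \<nu> a b = (\<lambda>(k, l). (k + 1 - a, l + 1 - a)) ` {p \<in> \<nu>. a \<le> fst p \<and> snd p \<le> b}"
  unfolding frel_def by force

lemma nesting_frel:
  assumes N: "nesting_rel n \<nu>" and a: "1 \<le> a" and b: "b \<le> n"
  shows "nesting_rel (Suc b - a) (frel \<nu> a b)"
  unfolding nesting_rel_def
proof (intro conjI allI impI)
  show "frel \<nu> a b \<subseteq> {1..Suc b - a} \<times> {1..Suc b - a}"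
  proof (clarsimp simp: frel_def)
    fix k l assume "(k, l) \<in> \<nu>" "a \<le> k" "l \<le> b"
    then show "Suc 0 \<le> Suc k - a \<and> Suc k - a \<le> Suc b - a \<and> Suc 0 \<le> Suc l - a \<and> Suc l - a \<le> Suc b - a"
      using nr_lt[OF N, of k l] by arith
  qed
next
  fix i j assume "(i, j) \<in> frel \<nu> a b"
  then obtain k l where "(k, l) \<in> \<nu>" "a \<le> k" "i = k + 1 - a" "j = l + 1 - a"
    by (auto simp: frel_def)
  then show "i < j" using nr_lt[OF N, of k l] by arith
next
  fix i j j' assume "(i, j) \<in> frel \<nu> a b" "(i, j') \<in> frel \<nu> a b"
  then obtain k l k' l' where "(k, l) \<in> \<nu>" "(k', l') \<in> \<nu>" "a \<le> k" "a \<le> k'" "i = k + 1 - a" "j = l + 1 - a"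
     "i = k' + 1 - a" "j' = l' + 1 - a"
    by (auto simp: frel_def)
  note F = this
  have "k = k'" using F by arith
  then show "j = j'" using F nr_fun[OF N, of k l l'] by auto
next
  fix i i' j assume "(i, j) \<in> frel \<nu> a b" "(i', j) \<in> frel \<nu> a b"
  then obtain k l k' l' where "(k, l) \<in> \<nu>" "(k', l') \<in> \<nu>" "a \<le> k" "a \<le> k'" "i = k + 1 - a" "j = l + 1 - a"
     "i' = k' + 1 - a" "j = l' + 1 - a"
    by (auto simp: frel_def)
  note F = this
  have "l = l'" using F nr_lt[OF N, of k l] nr_lt[OF N, of k' l'] by arith
  then show "i = i'" using F nr_inj[OF N, of k l k'] by auto
next
  fix i j i' j' assume "(i, j) \<in> frel \<nu> a b" "(i', j') \<in> frel \<nu> a b" "i < i'"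
  then obtain k l k' l' where "(k, l) \<in> \<nu>" "(k', l') \<in> \<nu>" "a \<le> k" "a \<le> k'" "i = k + 1 - a" "j = l + 1 - a"
     "i' = k' + 1 - a" "j' = l' + 1 - a"
    by (auto simp: frel_def)
  note F = this
  have "k < k'" using F \<open>i < i'\<close> by arith
  then have "l < k' \<or> l' < l" using nr_nest[OF N, of k l k' l'] F by blast
  then show "j < i' \<or> j' < j" using F nr_lt[OF N, of k l] nr_lt[OF N, of k' l'] by arith
qed

lemma ecount_frel:
  assumes lt: "\<forall>p\<in>\<nu>. fst p < snd p"
  shows "ecount (frel \<nu> a b) X Y = card {p \<in> \<nu>. a \<le> fst p \<and> snd p \<le> b \<and> fst p + 1 - a \<le> X \<and> Y \<le> snd p + 1 - a}"
proof -
  let ?g = "\<lambda>(k, l). (k + 1 - a, l + 1 - a)"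
  let ?S = "{p \<in> \<nu>. a \<le> fst p \<and> snd p \<le> b \<and> fst p + 1 - a \<le> X \<and> Y \<le> snd p + 1 - a}"
  have eq: "{p \<in> frel \<nu> a b. fst p \<le> X \<and> Y \<le> snd p} = ?g ` ?S"
    unfolding frel_def by force
  have inj: "inj_on ?g ?S"
    using lt by (force simp: inj_on_def)
  show ?thesis unfolding ecount_def eq using card_image[OF inj] by simp
qed

lemma split_word:
  assumes "1 \<le> i" "i < j" "j \<le> length w"
  shows "take (i - 1) w @ [w ! (i - 1)] @ fword w (i + 1) (j - 1) @ [w ! (j - 1)] @ fword w (j + 1) (length w) = w"
proof -
  have 1: "take (i - 1) w @ [w ! (i - 1)] = take i w"
    using assms take_Suc_conv_app_nth[of "i - 1" w] by simp
  have 2: "fword w (i + 1) (j - 1) = take (j - 1 - i) (drop i w)"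
    using assms by (simp add: fword_def)
  have 3: "take i w @ take (j - 1 - i) (drop i w) = take (j - 1) w"
    using assms take_add[of i "j - 1 - i" w] by simp
  have 4: "take (j - 1) w @ [w ! (j - 1)] = take j w"
    using assms take_Suc_conv_app_nth[of "j - 1" w] by simp
  have 5: "fword w (j + 1) (length w) = drop j w"
    by (simp add: fword_def)
  have 6: "w = take (j-1) w @ w!(j-1) # drop (Suc (j-1)) w" by (rule id_take_nth_drop) (use assms in simp)
  have 7: "Suc (j - 1) = j" using assms by simp
  have "take (i - 1) w @ [w ! (i - 1)] @ fword w (i + 1) (j - 1) @ [w ! (j - 1)] @ fword w (j + 1) (length w)
     = ((take (i - 1) w @ [w ! (i - 1)]) @ fword w (i + 1) (j - 1)) @ [w ! (j - 1)] @ fword w (j + 1) (length w)"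
    by simp
  also have "\<dots> = take (j-1) w @ w!(j-1) # drop (Suc (j-1)) w" unfolding 1 2 3 5 7 by simp
  also have "\<dots> = w" using 6 by simp
  finally show ?thesis .
qed

lemma lvs_TSing: "lvs (map TSing u) = u"
  by (induction u) auto

lemma lvs_TSing'[simp]: "concat (map (leaves \<circ> TSing) u) = u"
  by (induction u) auto




lemma phil_main:
  "nesting_rel (length w) \<nu> \<Longrightarrow> length w \<le> f \<Longrightarrow>
   lvs (phil f c w \<nu>) = w \<and>
   (\<forall>x y. x < y \<longrightarrow> y < length w \<longrightarrow> swL c (phil f c w \<nu>) x y = (odd (ecount \<nu> (Suc x) (Suc y)) = c))"
proof (induction f arbitrary: c w \<nu>)
  case 0
  then show ?case by simp
next
  case (Suc f)
  note N = Suc.prems(1)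
  let ?n = "length w"
  show ?case
  proof (cases "\<nu> = {}")
    case True
    then show ?thesis by (auto simp: ecount_def swL_sing lvs_TSing)
  next
    case False
    define i where "i = (LEAST i. \<exists>j. (i, j) \<in> \<nu>)"
    define j where "j = (THE j. (i, j) \<in> \<nu>)"
    obtain i0 j0 where ij0: "(i0, j0) \<in> \<nu>" using False by auto
    have ex: "\<exists>j. (i, j) \<in> \<nu>" unfolding i_def by (rule LeastI_ex) (use ij0 in blast)
    have ij: "(i, j) \<in> \<nu>" unfolding j_def using ex nr_fun[OF N, of i] by (metis theI)
    have imin: "\<And>k l. (k, l) \<in> \<nu> \<Longrightarrow> i \<le> k" unfolding i_def by (blast intro: Least_le)
    have b1: "1 \<le> i" "i < j" "j \<le> ?n" using nr_range[OF N ij] nr_lt[OF N ij] by auto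
    have jfun: "\<And>l. (i, l) \<in> \<nu> \<Longrightarrow> l = j" using nr_fun[OF N ij] by blast
    have inner: "\<And>k l. (k, l) \<in> \<nu> \<Longrightarrow> i < k \<Longrightarrow> k \<le> j \<Longrightarrow> l < j"
      using nr_nest[OF N ij] by fastforce
    have notj: "\<And>l. (j, l) \<notin> \<nu>"
      using nr_nest[OF N ij] nr_lt[OF N] b1 by fastforce
    define w1 where "w1 = fword w (i + 1) (j - 1)"
    define \<nu>1 where "\<nu>1 = frel \<nu> (i + 1) (j - 1)"
    define w2 where "w2 = fword w (j + 1) ?n"
    define \<nu>2 where "\<nu>2 = frel \<nu> (j + 1) ?n"
    have len1: "length w1 = j - 1 - i" unfolding w1_def using b1 fword_len[of "i+1" "j-1" w] by simp
    have len2: "length w2 = ?n - j" unfolding w2_def using b1 fword_len[of "j+1" ?n w] by simp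
    have N1: "nesting_rel (length w1) \<nu>1" unfolding \<nu>1_def len1
      using nesting_frel[OF N, of "i+1" "j - 1"] b1 by simp
    have N2: "nesting_rel (length w2) \<nu>2" unfolding \<nu>2_def len2
      using nesting_frel[OF N, of "j+1" ?n] b1 by simp
    have f1: "length w1 \<le> f" "length w2 \<le> f" using len1 len2 b1 Suc.prems(2) by auto
    have IH1: "lvs (phil f (\<not> c) w1 \<nu>1) = w1 \<and>
      (\<forall>x y. x < y \<longrightarrow> y < length w1 \<longrightarrow> swL (\<not> c) (phil f (\<not> c) w1 \<nu>1) x y = (odd (ecount \<nu>1 (Suc x) (Suc y)) = (\<not> c)))"
      by (rule Suc.IH[OF N1 f1(1)])
    have IH2: "lvs (phil f c w2 \<nu>2) = w2 \<and>
      (\<forall>x y. x < y \<longrightarrow> y < length w2 \<longrightarrow> swL c (phil f c w2 \<nu>2) x y = (odd (ecount \<nu>2 (Suc x) (Suc y)) = c))"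
      by (rule Suc.IH[OF N2 f1(2)])
    define L1 where "L1 = phil f (\<not> c) w1 \<nu>1"
    define L2 where "L2 = phil f c w2 \<nu>2"
    define BL where "BL = [TSing (w ! (i - 1))] @ L1 @ [TSing (w ! (j - 1))]"
    define B where "B = comb (\<not> c) BL"
    define P where "P = map TSing (take (i - 1) w)"
    have phil_eq: "phil (Suc f) c w \<nu> = P @ [B] @ L2"
      using False unfolding P_def B_def BL_def L1_def L2_def w1_def w2_def \<nu>1_def \<nu>2_def
      by (simp add: Let_def i_def[symmetric] j_def[symmetric])
    have BLne: "BL \<noteq> []" unfolding BL_def by simp
    have lvsBL: "lvs BL = [w ! (i - 1)] @ w1 @ [w ! (j - 1)]" unfolding BL_def L1_def using IH1 by simp
    have leavesB: "leaves B = [w ! (i - 1)] @ w1 @ [w ! (j - 1)]"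
      unfolding B_def using comb_leaves[OF BLne] lvsBL by simp
    have lenB: "length (leaves B) = j - i + 1" using leavesB len1 b1 by simp
    have lenP: "length (lvs P) = i - 1" unfolding P_def lvs_TSing using b1 by simp
    have lvs_eq: "lvs (phil (Suc f) c w \<nu>) = w"
      unfolding phil_eq using leavesB IH2 split_word[OF b1] unfolding P_def L2_def w1_def w2_def
      by (simp add: lvs_TSing)
    have lt: "\<forall>p\<in>\<nu>. fst p < snd p" using nr_lt[OF N] by auto
    have fin: "finite \<nu>" using nr_finite[OF N] .
    have E0: "ecount \<nu> X Y = 0" if "X < i" for X Y
      unfolding ecount_def using imin that by (fastforce simp: card_eq_0_iff)
    have E3: "ecount \<nu> X Y = 0" if "X \<le> j" "j < Y" for X Y
    proof -
      have S: "{p \<in> \<nu>. fst p \<le> X \<and> Y \<le> snd p} = {}"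
      proof (safe)
        fix k l assume kl: "(k, l) \<in> \<nu>" "fst (k, l) \<le> X" "Y \<le> snd (k, l)"
        show "(k, l) \<in> {}"
        proof (cases "k = i")
          case True then show ?thesis using jfun kl that by fastforce
        next
          case False
          then have "i < k" using imin kl by fastforce
          then show ?thesis using inner[OF kl(1)] kl that by fastforce
        qed
      qed
      show ?thesis unfolding ecount_def S by simp
    qed
    have E12: "ecount \<nu> X Y = Suc (card {p \<in> \<nu>. i < fst p \<and> fst p \<le> X \<and> Y \<le> snd p})"
      if "i \<le> X" "X < j" "Y \<le> j" for X Y
    proof -
      have "{p \<in> \<nu>. fst p \<le> X \<and> Y \<le> snd p} = insert (i, j) {p \<in> \<nu>. i < fst p \<and> fst p \<le> X \<and> Y \<le> snd p}"
      proof (rule set_eqI)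
        fix p :: "nat \<times> nat"
        obtain k l where p: "p = (k, l)" by force
        show "p \<in> {p \<in> \<nu>. fst p \<le> X \<and> Y \<le> snd p} \<longleftrightarrow> p \<in> insert (i, j) {p \<in> \<nu>. i < fst p \<and> fst p \<le> X \<and> Y \<le> snd p}"
        proof (cases "k = i")
          case True then show ?thesis using p ij that by (auto dest: jfun)
        next
          case False
          then have "(k, l) \<in> \<nu> \<Longrightarrow> i < k" using imin[of k l] by simp
          then show ?thesis using p False by auto
        qed
      qed
      moreover have "(i, j) \<notin> {p \<in> \<nu>. i < fst p \<and> fst p \<le> X \<and> Y \<le> snd p}" by simp
      moreover have "finite {p \<in> \<nu>. i < fst p \<and> fst p \<le> X \<and> Y \<le> snd p}" using fin by simp
      ultimately show ?thesis unfolding ecount_def by simp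
    qed
    have Einner0: "card {p \<in> \<nu>. i < fst p \<and> fst p \<le> X \<and> Y \<le> snd p} = 0" if "X < j" "Y = j" for X Y
    proof -
      have S: "{p \<in> \<nu>. i < fst p \<and> fst p \<le> X \<and> Y \<le> snd p} = {}"
        using inner that by fastforce
      show ?thesis unfolding S by simp
    qed
    have Einner0': "card {p \<in> \<nu>. i < fst p \<and> fst p \<le> X \<and> Y \<le> snd p} = 0" if "X = i" for X Y
    proof -
      have S: "{p \<in> \<nu>. i < fst p \<and> fst p \<le> X \<and> Y \<le> snd p} = {}" using that by auto
      show ?thesis unfolding S by simp
    qed
    have E5: "card {p \<in> \<nu>. i < fst p \<and> fst p \<le> X \<and> Y \<le> snd p} = ecount \<nu>1 (X - i) (Y - i)"
      if "i < X" "X < Y" "Y < j" for X Y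
    proof -
      have "ecount \<nu>1 (X - i) (Y - i) = card {p \<in> \<nu>. i + 1 \<le> fst p \<and> snd p \<le> j - 1 \<and> fst p + 1 - (i + 1) \<le> X - i \<and> Y - i \<le> snd p + 1 - (i + 1)}"
        unfolding \<nu>1_def by (rule ecount_frel[OF lt])
      also have "{p \<in> \<nu>. i + 1 \<le> fst p \<and> snd p \<le> j - 1 \<and> fst p + 1 - (i + 1) \<le> X - i \<and> Y - i \<le> snd p + 1 - (i + 1)}
         = {p \<in> \<nu>. i < fst p \<and> fst p \<le> X \<and> Y \<le> snd p}"
      proof (safe)
        fix k l assume kl: "(k, l) \<in> \<nu>" "i < fst (k, l)" "fst (k, l) \<le> X" "Y \<le> snd (k, l)"
        then have "l < j" using inner[OF kl(1)] that by simp
        then show "snd (k, l) \<le> j - 1" by simp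
      qed (use that lt in auto)
      finally show ?thesis by simp
    qed
    have E4: "ecount \<nu> X Y = ecount \<nu>2 (X - j) (Y - j)" if "j < X" "X < Y" "Y \<le> ?n" for X Y
    proof -
      have "ecount \<nu>2 (X - j) (Y - j) = card {p \<in> \<nu>. j + 1 \<le> fst p \<and> snd p \<le> ?n \<and> fst p + 1 - (j + 1) \<le> X - j \<and> Y - j \<le> snd p + 1 - (j + 1)}"
        unfolding \<nu>2_def by (rule ecount_frel[OF lt])
      also have "{p \<in> \<nu>. j + 1 \<le> fst p \<and> snd p \<le> ?n \<and> fst p + 1 - (j + 1) \<le> X - j \<and> Y - j \<le> snd p + 1 - (j + 1)}
         = {p \<in> \<nu>. fst p \<le> X \<and> Y \<le> snd p}"
      proof (safe)
        fix k l assume kl: "(k, l) \<in> \<nu>" "fst (k, l) \<le> X" "Y \<le> snd (k, l)"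
        show "snd (k, l) \<le> ?n" using nr_range[OF N kl(1)] by simp
        show "j + 1 \<le> fst (k, l)"
        proof (rule ccontr)
          assume "\<not> j + 1 \<le> fst (k, l)"
          then have "k \<le> j" by simp
          show False
          proof (cases "k = i")
            case True then show False using jfun kl that by fastforce
          next
            case False
            then have "i < k" using imin[of k l] kl by fastforce
            then show False using inner[OF kl(1)] kl that \<open>k \<le> j\<close> by fastforce
          qed
        qed
        then show "fst (k, l) + 1 - (j + 1) \<le> X - j" using kl by simp
        show "Y - j \<le> snd (k, l) + 1 - (j + 1)" using kl by simp
      qed (use that lt in auto)
      finally show ?thesis unfolding ecount_def by simp
    qed
    have sw_eq: "swL c (phil (Suc f) c w \<nu>) x y = (odd (ecount \<nu> (Suc x) (Suc y)) = c)"
      if xy: "x < y" "y < ?n" for x y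
    proof -
      have A1: "swL c (P @ [B] @ L2) x y = (if y < i - 1 then swL c P x y
           else if i - 1 \<le> x then swL c ([B] @ L2) (x - (i - 1)) (y - (i - 1)) else \<not> c)"
        using swL_append[of c P "[B] @ L2" x y] lenP by simp
      show ?thesis
      proof (cases "y < i - 1")
        case True
        have "y < length (take (i - 1) w)" using True b1 by simp
        then have "swL c P x y = (\<not> c)" unfolding P_def using swL_sing[OF xy(1)] by blast
        then show ?thesis unfolding phil_eq A1 using True E0[of "Suc x" "Suc y"] xy by simp
      next
        case ny: False
        show ?thesis
        proof (cases "i - 1 \<le> x")
          case False
          then show ?thesis unfolding phil_eq A1 using ny E0[of "Suc x" "Suc y"] by simp
        next
          case ix: True
          define x' where "x' = x - (i - 1)"
          define y' where "y' = y - (i - 1)"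
          have A2: "swL c ([B] @ L2) x' y' = (if y' < j - i + 1 then swL c [B] x' y'
             else if j - i + 1 \<le> x' then swL c L2 (x' - (j - i + 1)) (y' - (j - i + 1)) else \<not> c)"
            using swL_append[of c "[B]" L2 x' y'] lenB by simp
          have R: "swL c (phil (Suc f) c w \<nu>) x y = swL c ([B] @ L2) x' y'"
            unfolding phil_eq A1 x'_def y'_def using ny ix by simp
          show ?thesis
          proof (cases "y' < j - i + 1")
            case yB: True
            have "swL c [B] x' y' = sw B x' y'" using yB lenB by simp
            also have "\<dots> = swL (\<not> c) BL x' y'" unfolding B_def
              using comb_sw[OF BLne, of y' "\<not> c" x'] yB lvsBL len1 b1 by simp
            finally have SB: "swL c [B] x' y' = swL (\<not> c) BL x' y'" .
            show ?thesis
            proof (cases "x' = 0")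
              case True
              have "x' < y'" using xy ix unfolding x'_def y'_def by simp
              then have "swL (\<not> c) BL x' y' = c" unfolding BL_def using True by simp
              moreover have "ecount \<nu> (Suc x) (Suc y) = 1"
                using E12[of "Suc x" "Suc y"] Einner0'[of "Suc x" "Suc y"] True ix yB b1 xy
                unfolding x'_def y'_def by simp
              ultimately show ?thesis using R A2 yB SB by simp
            next
              case x0: False
              have S1: "swL (\<not> c) BL x' y' = swL (\<not> c) (L1 @ [TSing (w ! (j - 1))]) (x' - 1) (y' - 1)"
              proof -
                have "x' < y'" using xy ix unfolding x'_def y'_def by simp
                then show ?thesis unfolding BL_def using x0 by simp
              qed
              have S2: "swL (\<not> c) (L1 @ [TSing (w ! (j - 1))]) (x' - 1) (y' - 1) =
                 (if y' - 1 < length w1 then swL (\<not> c) L1 (x' - 1) (y' - 1)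
                  else if length w1 \<le> x' - 1 then swL (\<not> c) [TSing (w ! (j - 1))] (x' - 1 - length w1) (y' - 1 - length w1)
                  else c)"
                using swL_append[of "\<not> c" L1 "[TSing (w ! (j - 1))]" "x' - 1" "y' - 1"] IH1 unfolding L1_def by simp
              show ?thesis
              proof (cases "y' - 1 < length w1")
                case True
                have xx: "x' - 1 = x - i" "y' - 1 = y - i" using x0 ix b1 unfolding x'_def y'_def by auto
                have "swL (\<not> c) L1 (x - i) (y - i) = (odd (ecount \<nu>1 (Suc (x - i)) (Suc (y - i))) = (\<not> c))"
                proof -
                  have "x - i < y - i" "y - i < length w1" using True xy x0 ix xx b1 unfolding x'_def by auto
                  then show ?thesis using IH1 unfolding L1_def by blast
                qed
                moreover have "ecount \<nu> (Suc x) (Suc y) = Suc (ecount \<nu>1 (Suc (x - i)) (Suc (y - i)))"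
                proof -
                  have "i < Suc x" "Suc y < j" using x0 ix True len1 xx unfolding x'_def by auto
                  then show ?thesis using E12[of "Suc x" "Suc y"] E5[of "Suc x" "Suc y"] xy
                    by (simp add: Suc_diff_le)
                qed
                ultimately show ?thesis using R A2 yB SB S1 S2 True xx by simp
              next
                case False
                have "\<not> length w1 \<le> x' - 1" using False xy x0 yB len1 unfolding x'_def y'_def by auto
                moreover have "Suc y = j" using False yB len1 b1 ix x0 xy unfolding y'_def x'_def by auto
                moreover have "ecount \<nu> (Suc x) (Suc y) = 1"
                  using E12[of "Suc x" "Suc y"] Einner0[of "Suc x" "Suc y"] calculation xy ix b1 by simp
                ultimately show ?thesis using R A2 yB SB S1 S2 False by simp
              qed
            qed
          next
            case nyB: False
            show ?thesis
            proof (cases "j - i + 1 \<le> x'")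
              case True
              have xx: "x' - (j - i + 1) = x - j" "y' - (j - i + 1) = y - j"
                using True ix b1 unfolding x'_def y'_def by auto
              have "x - j < y - j" "y - j < length w2" using xx True xy len2 b1 unfolding x'_def by auto
              then have "swL c L2 (x - j) (y - j) = (odd (ecount \<nu>2 (Suc (x - j)) (Suc (y - j))) = c)"
                using IH2 unfolding L2_def by blast
              moreover have "ecount \<nu> (Suc x) (Suc y) = ecount \<nu>2 (Suc (x - j)) (Suc (y - j))"
              proof -
                have "j < Suc x" using True ix b1 unfolding x'_def by auto
                then show ?thesis using E4[of "Suc x" "Suc y"] xy by (simp add: Suc_diff_le)
              qed
              ultimately show ?thesis using R A2 nyB True xx by simp
            next
              case False
              have "Suc x \<le> j" "j < Suc y" using False nyB ix b1 unfolding x'_def y'_def by auto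
              then show ?thesis using R A2 nyB False E3[of "Suc x" "Suc y"] by simp
            qed
          qed
        qed
      qed
    qed
    show ?thesis using lvs_eq sw_eq by blast
  qed
qed




lemma Phi_props:
  assumes "is_nw w \<nu>"
  shows "leaves (Phi c w \<nu>) = w \<and>
    (\<forall>x y. x < y \<longrightarrow> y < length w \<longrightarrow> sw (Phi c w \<nu>) x y = (odd (ecount \<nu> (Suc x) (Suc y)) = c))"
proof -
  have N: "nesting_rel (length w) \<nu>" and ne: "w \<noteq> []" using assms by (auto simp: is_nw_def)
  have M: "lvs (phil (length w) c w \<nu>) = w \<and>
   (\<forall>x y. x < y \<longrightarrow> y < length w \<longrightarrow> swL c (phil (length w) c w \<nu>) x y = (odd (ecount \<nu> (Suc x) (Suc y)) = c))"
    using phil_main[OF N order.refl] by blast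
  have Lne: "phil (length w) c w \<nu> \<noteq> []" using M ne by auto
  show ?thesis unfolding Phi_def using M comb_leaves[OF Lne] comb_sw[OF Lne] by auto
qed

lemma ecount_sx:
  assumes N: "nesting_rel n \<nu>"
  shows "ecount \<nu> (Suc X) Y = ecount \<nu> X Y + (if \<exists>l. Y \<le> l \<and> (Suc X, l) \<in> \<nu> then 1 else 0)"
proof -
  have fin: "finite \<nu>" using nr_finite[OF N] .
  let ?A = "{p \<in> \<nu>. fst p \<le> X \<and> Y \<le> snd p}"
  let ?B = "{p \<in> \<nu>. fst p = Suc X \<and> Y \<le> snd p}"
  have U: "{p \<in> \<nu>. fst p \<le> Suc X \<and> Y \<le> snd p} = ?A \<union> ?B" by auto
  have D: "?A \<inter> ?B = {}" by auto
  have cB: "card ?B = (if \<exists>l. Y \<le> l \<and> (Suc X, l) \<in> \<nu> then 1 else 0)"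
  proof (cases "\<exists>l. Y \<le> l \<and> (Suc X, l) \<in> \<nu>")
    case True
    then obtain l where l: "Y \<le> l" "(Suc X, l) \<in> \<nu>" by blast
    have "?B = {(Suc X, l)}" using l by (auto dest: nr_fun[OF N, of "Suc X" l])
    then show ?thesis using True by simp
  next
    case False
    then have S: "?B = {}" by auto
    show ?thesis using False unfolding S by simp
  qed
  show ?thesis unfolding ecount_def U using card_Un_disjoint[of ?A ?B] fin D cB by simp
qed

lemma ecount_sy:
  assumes N: "nesting_rel n \<nu>"
  shows "ecount \<nu> X Y = ecount \<nu> X (Suc Y) + (if \<exists>k. k \<le> X \<and> (k, Y) \<in> \<nu> then 1 else 0)"
proof -
  have fin: "finite \<nu>" using nr_finite[OF N] .
  let ?A = "{p \<in> \<nu>. fst p \<le> X \<and> Suc Y \<le> snd p}"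
  let ?B = "{p \<in> \<nu>. fst p \<le> X \<and> snd p = Y}"
  have U: "{p \<in> \<nu>. fst p \<le> X \<and> Y \<le> snd p} = ?A \<union> ?B" by auto
  have D: "?A \<inter> ?B = {}" by auto
  have cB: "card ?B = (if \<exists>k. k \<le> X \<and> (k, Y) \<in> \<nu> then 1 else 0)"
  proof (cases "\<exists>k. k \<le> X \<and> (k, Y) \<in> \<nu>")
    case True
    then obtain k where k: "k \<le> X" "(k, Y) \<in> \<nu>" by blast
    have "?B = {(k, Y)}" using k by (auto dest: nr_inj[OF N, of _ Y k])
    then show ?thesis using True by simp
  next
    case False
    then have S: "?B = {}" by auto
    show ?thesis using False unfolding S by simp
  qed
  show ?thesis unfolding ecount_def U using card_Un_disjoint[of ?A ?B] fin D cB by simp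
qed

lemma ecount_0: "nesting_rel n \<nu> \<Longrightarrow> ecount \<nu> 0 Y = 0"
proof -
  assume N: "nesting_rel n \<nu>"
  have S: "{p \<in> \<nu>. fst p \<le> 0 \<and> Y \<le> snd p} = {}" using nr_range[OF N] by fastforce
  show ?thesis unfolding ecount_def S by simp
qed

lemma ecount_n: "nesting_rel n \<nu> \<Longrightarrow> ecount \<nu> X (Suc n) = 0"
proof -
  assume N: "nesting_rel n \<nu>"
  have S: "{p \<in> \<nu>. fst p \<le> X \<and> Suc n \<le> snd p} = {}" using nr_range[OF N] by fastforce
  show ?thesis unfolding ecount_def S by simp
qed

definition Or :: "'r mso \<Rightarrow> 'r mso \<Rightarrow> 'r mso" where "Or a b = Neg (Conj (Neg a) (Neg b))"
definition Imp :: "'r mso \<Rightarrow> 'r mso \<Rightarrow> 'r mso" where "Imp a b = Neg (Conj a (Neg b))"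
definition Iff :: "'r mso \<Rightarrow> 'r mso \<Rightarrow> 'r mso" where "Iff a b = Conj (Imp a b) (Imp b a)"
definition Xor :: "'r mso \<Rightarrow> 'r mso \<Rightarrow> 'r mso" where "Xor a b = Neg (Iff a b)"
definition All1 :: "nat \<Rightarrow> 'r mso \<Rightarrow> 'r mso" where "All1 x a = Neg (Ex1 x (Neg a))"

lemma sat_conn[simp]:
  "sat s fo so (Or a b) = (sat s fo so a \<or> sat s fo so b)"
  "sat s fo so (Imp a b) = (sat s fo so a \<longrightarrow> sat s fo so b)"
  "sat s fo so (Iff a b) = (sat s fo so a \<longleftrightarrow> sat s fo so b)"
  "sat s fo so (Xor a b) = (sat s fo so a \<noteq> sat s fo so b)"
  "sat s fo so (All1 x a) = (\<forall>v \<in> sdom s. sat s (fo(x := v)) so a)"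
  by (auto simp: Or_def Imp_def Iff_def Xor_def All1_def)

lemma conn_fv[simp]:
  "fv1 (Or a b) = fv1 a \<union> fv1 b" "fv1 (Imp a b) = fv1 a \<union> fv1 b" "fv1 (Iff a b) = fv1 a \<union> fv1 b"
  "fv1 (Xor a b) = fv1 a \<union> fv1 b" "fv1 (All1 x a) = fv1 a - {x}"
  "fv2 (Or a b) = fv2 a \<union> fv2 b" "fv2 (Imp a b) = fv2 a \<union> fv2 b" "fv2 (Iff a b) = fv2 a \<union> fv2 b"
  "fv2 (Xor a b) = fv2 a \<union> fv2 b" "fv2 (All1 x a) = fv2 a"
  "is_FO (Or a b) = (is_FO a \<and> is_FO b)" "is_FO (Imp a b) = (is_FO a \<and> is_FO b)"
  "is_FO (Iff a b) = (is_FO a \<and> is_FO b)" "is_FO (Xor a b) = (is_FO a \<and> is_FO b)"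
  "is_FO (All1 x a) = is_FO a"
  by (auto simp: Or_def Imp_def Iff_def Xor_def All1_def)

definition lt1 :: "nat \<Rightarrow> nat \<Rightarrow> 'a txt_sym mso" where
  "lt1 a b = Conj (Rel Ord1 [a, b]) (Neg (Eq a b))"
definition Pf :: "bool \<Rightarrow> nat \<Rightarrow> nat \<Rightarrow> 'a txt_sym mso" where
  "Pf c a b = (if c then Rel Ord2 [b, a] else Neg (Rel Ord2 [b, a]))"
definition predf :: "nat \<Rightarrow> nat \<Rightarrow> 'a txt_sym mso" where
  "predf p x = Conj (lt1 p x) (Neg (Ex1 12 (Conj (lt1 p 12) (lt1 12 x))))"
definition Pmf :: "bool \<Rightarrow> nat \<Rightarrow> nat \<Rightarrow> 'a txt_sym mso" where
  "Pmf c x y = Ex1 10 (Conj (predf 10 x) (Pf c 10 y))"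
definition Ppf :: "bool \<Rightarrow> nat \<Rightarrow> nat \<Rightarrow> 'a txt_sym mso" where
  "Ppf c x y = Ex1 11 (Conj (predf y 11) (Pf c x 11))"
definition nuf :: "bool \<Rightarrow> nat \<Rightarrow> nat \<Rightarrow> 'a txt_sym mso" where
  "nuf c x y = Conj (lt1 x y) (Conj (Xor (Pf c x y) (Pmf c x y)) (Xor (Pf c x y) (Ppf c x y)))"

definition theta :: "bool \<Rightarrow> 'a txt_sym mso" where
  "theta c = Conj
     (All1 0 (All1 1 (All1 2 (Imp (Conj (nuf c 0 1) (nuf c 0 2)) (Eq 1 2)))))
     (Conj (All1 0 (All1 1 (All1 2 (Imp (Conj (nuf c 0 2) (nuf c 1 2)) (Eq 0 1)))))
     (Conj (All1 0 (All1 1 (All1 2 (All1 3 (Imp (Conj (nuf c 0 1) (Conj (nuf c 2 3) (lt1 0 2)))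
                (Or (lt1 1 2) (lt1 3 1)))))))
       (All1 0 (All1 1 (Imp (lt1 0 1) (Iff (Xor (Pf c 0 1) (Pmf c 0 1))
           (Ex1 4 (Conj (Rel Ord1 [1, 4]) (nuf c 0 4)))))))))"

lemma fo_simps[simp]:
  "is_FO (lt1 a b)" "is_FO (Pf c a b)" "is_FO (predf p x)" "is_FO (Pmf c x y)" "is_FO (Ppf c x y)"
  "is_FO (nuf c x y)" "is_FO (theta c)"
  "fv2 (lt1 a b) = {}" "fv2 (Pf c a b) = {}" "fv2 (predf p x) = {}" "fv2 (Pmf c x y) = {}" "fv2 (Ppf c x y) = {}"
  "fv2 (nuf c x y) = {}" "fv2 (theta c) = {}"
  by (auto simp: lt1_def Pf_def predf_def Pmf_def Ppf_def nuf_def theta_def)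

lemma fv1_nuf: "x \<notin> {10, 11, 12} \<Longrightarrow> y \<notin> {10, 11, 12} \<Longrightarrow> fv1 (nuf c x y) = {x, y}"
  by (auto simp: lt1_def Pf_def predf_def Pmf_def Ppf_def nuf_def)

lemma fv1_theta: "fv1 (theta c) = {}"
  by (auto simp: lt1_def Pf_def predf_def Pmf_def Ppf_def nuf_def theta_def)

definition Ps :: "bool \<Rightarrow> 'a txt_term \<Rightarrow> nat \<Rightarrow> nat \<Rightarrow> bool" where
  "Ps c t x y = (([y, x] \<in> srel (text_of t) Ord2) = c)"

definition NU :: "bool \<Rightarrow> 'a txt_term \<Rightarrow> nat \<Rightarrow> nat \<Rightarrow> bool" where
  "NU c t x y = (x < y \<and> y < length (leaves t) \<and>
     (Ps c t x y \<noteq> (0 < x \<and> Ps c t (x - 1) y)) \<and>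
     (Ps c t x y \<noteq> (Suc y < length (leaves t) \<and> Ps c t x (Suc y))))"

lemma sat_lt1[simp]: "sat (text_of t) fo so (lt1 a b) = (fo a < fo b \<and> fo b < length (leaves t))"
  by (auto simp: lt1_def text_of_simps)

lemma sat_Pf[simp]: "sat (text_of t) fo so (Pf c a b) = Ps c t (fo a) (fo b)"
  by (auto simp: Pf_def Ps_def)

lemma sat_predf[simp]: "p \<noteq> 12 \<Longrightarrow> x \<noteq> 12 \<Longrightarrow>
  sat (text_of t) fo so (predf p x) = (0 < fo x \<and> fo x < length (leaves t) \<and> fo p = fo x - 1)"
proof -
  assume "p \<noteq> 12" "x \<noteq> 12"
  then have "sat (text_of t) fo so (predf p x) = (fo p < fo x \<and> fo x < length (leaves t) \<and>
     \<not> (\<exists>v. v < length (leaves t) \<and> fo p < v \<and> v < fo x))"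
    by (auto simp: predf_def text_of_simps)
  also have "\<dots> = (0 < fo x \<and> fo x < length (leaves t) \<and> fo p = fo x - 1)"
  proof
    assume A: "fo p < fo x \<and> fo x < length (leaves t) \<and> \<not> (\<exists>v. v < length (leaves t) \<and> fo p < v \<and> v < fo x)"
    have "fo p = fo x - 1"
    proof (rule ccontr)
      assume "fo p \<noteq> fo x - 1"
      then have "fo p < Suc (fo p)" "Suc (fo p) < fo x" "Suc (fo p) < length (leaves t)" using A by auto
      then show False using A by blast
    qed
    then show "0 < fo x \<and> fo x < length (leaves t) \<and> fo p = fo x - 1" using A by auto
  next
    assume "0 < fo x \<and> fo x < length (leaves t) \<and> fo p = fo x - 1"
    then show "fo p < fo x \<and> fo x < length (leaves t) \<and> \<not> (\<exists>v. v < length (leaves t) \<and> fo p < v \<and> v < fo x)"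
      by auto
  qed
  finally show ?thesis .
qed

lemma sat_Pmf[simp]: "x \<notin> {10, 12} \<Longrightarrow> y \<noteq> 10 \<Longrightarrow>
  sat (text_of t) fo so (Pmf c x y) = (0 < fo x \<and> fo x < length (leaves t) \<and> Ps c t (fo x - 1) (fo y))"
  by (auto simp: Pmf_def text_of_simps)

lemma sat_Ppf[simp]: "y \<notin> {11, 12} \<Longrightarrow> x \<noteq> 11 \<Longrightarrow>
  sat (text_of t) fo so (Ppf c x y) = (Suc (fo y) < length (leaves t) \<and> Ps c t (fo x) (Suc (fo y)))"
  by (auto simp: Ppf_def text_of_simps)

lemma sat_nuf[simp]: "x \<notin> {10, 11, 12} \<Longrightarrow> y \<notin> {10, 11, 12} \<Longrightarrow>
  sat (text_of t) fo so (nuf c x y) = NU c t (fo x) (fo y)"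
  by (auto simp: nuf_def NU_def)

definition thetaS :: "bool \<Rightarrow> 'a txt_term \<Rightarrow> bool" where
  "thetaS c t = (let n = length (leaves t) in
    (\<forall>x<n. \<forall>y<n. \<forall>y'<n. NU c t x y \<and> NU c t x y' \<longrightarrow> y = y') \<and>
    (\<forall>x<n. \<forall>x'<n. (\<exists>y<n. NU c t x y \<and> NU c t x' y) \<longrightarrow> x = x') \<and>
    (\<forall>x<n. \<forall>y<n. \<forall>x'<n. \<forall>y'<n. NU c t x y \<and> NU c t x' y' \<and> x < x' \<longrightarrow> y < x' \<or> y' < y) \<and>
    (\<forall>x<n. \<forall>y<n. x < y \<longrightarrow>
       ((Ps c t x y \<noteq> (0 < x \<and> Ps c t (x - 1) y)) \<longleftrightarrow> (\<exists>l<n. y \<le> l \<and> NU c t x l))))"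

lemma sat_theta: "sat (text_of t) fo so (theta c) = thetaS c t"
  unfolding theta_def thetaS_def Let_def by (simp add: text_of_simps Ball_def Bex_def)




lemma Ps_sw: "x < y \<Longrightarrow> y < length (leaves t) \<Longrightarrow> Ps c t x y = (sw t x y = c)"
  unfolding Ps_def using Ord2_sw by blast

lemma image_theta:
  assumes nw: "is_nw w \<nu>"
  shows "thetaS c (Phi c w \<nu>)"
proof -
  define t where "t = Phi c w \<nu>"
  define n where "n = length w"
  have N: "nesting_rel n \<nu>" using nw unfolding is_nw_def n_def by simp
  have PP: "leaves t = w \<and> (\<forall>x y. x < y \<longrightarrow> y < n \<longrightarrow> sw t x y = (odd (ecount \<nu> (Suc x) (Suc y)) = c))"
    using Phi_props[OF nw, of c] unfolding t_def n_def by blast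
  have lt: "length (leaves t) = n" using PP n_def by simp
  have PsE: "Ps c t x y = odd (ecount \<nu> (Suc x) (Suc y))" if "x < y" "y < n" for x y
    using Ps_sw[of x y t c] PP that lt by auto
  have Lm: "(0 < x \<and> Ps c t (x - 1) y) = odd (ecount \<nu> x (Suc y))" if "x < y" "y < n" for x y
  proof (cases x)
    case 0 then show ?thesis using ecount_0[OF N] by simp
  next
    case (Suc x') then show ?thesis using PsE[of x' y] that by simp
  qed
  have Lp: "(Suc y < n \<and> Ps c t x (Suc y)) = odd (ecount \<nu> (Suc x) (Suc (Suc y)))" if "x < y" "y < n" for x y
  proof (cases "Suc y < n")
    case True then show ?thesis using PsE[of x "Suc y"] that by simp
  next
    case False
    then have "Suc y = n" using that by simp
    then show ?thesis using ecount_n[OF N, of "Suc x"] False by simp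
  qed
  have A: "(Ps c t x y \<noteq> (0 < x \<and> Ps c t (x - 1) y)) = (\<exists>l. Suc y \<le> l \<and> (Suc x, l) \<in> \<nu>)"
    if "x < y" "y < n" for x y
    using PsE[OF that] Lm[OF that] ecount_sx[OF N, of x "Suc y"] by simp
  have B: "(Ps c t x y \<noteq> (Suc y < n \<and> Ps c t x (Suc y))) = (\<exists>k. k \<le> Suc x \<and> (k, Suc y) \<in> \<nu>)"
    if "x < y" "y < n" for x y
    using PsE[OF that] Lp[OF that] ecount_sy[OF N, of "Suc x" "Suc y"] by simp
  have NUiff: "NU c t x y \<longleftrightarrow> (Suc x, Suc y) \<in> \<nu>" for x y
  proof
    assume H: "NU c t x y"
    then have xy: "x < y" "y < n" unfolding NU_def lt by auto
    obtain l where l: "Suc y \<le> l" "(Suc x, l) \<in> \<nu>" using H A[OF xy] unfolding NU_def lt by blast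
    obtain k where k: "k \<le> Suc x" "(k, Suc y) \<in> \<nu>" using H B[OF xy] unfolding NU_def lt by blast
    show "(Suc x, Suc y) \<in> \<nu>"
    proof (cases "k = Suc x")
      case True then show ?thesis using k by simp
    next
      case False
      then have "k < Suc x" using k by simp
      then have "Suc y < Suc x \<or> l < Suc y" using nr_nest[OF N k(2) l(2)] by blast
      then show ?thesis using xy l by simp
    qed
  next
    assume H: "(Suc x, Suc y) \<in> \<nu>"
    then have xy: "x < y" "y < n" using nr_lt[OF N H] nr_range[OF N H] by auto
    show "NU c t x y" unfolding NU_def lt using A[OF xy] B[OF xy] xy H by auto
  qed
  have T4: "(Ps c t x y \<noteq> (0 < x \<and> Ps c t (x - 1) y)) = (\<exists>l<n. y \<le> l \<and> NU c t x l)"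
    if "x < y" "y < n" for x y
  proof -
    have "(\<exists>l. Suc y \<le> l \<and> (Suc x, l) \<in> \<nu>) = (\<exists>l<n. y \<le> l \<and> NU c t x l)"
    proof
      assume "\<exists>l. Suc y \<le> l \<and> (Suc x, l) \<in> \<nu>"
      then obtain l where l: "Suc y \<le> l" "(Suc x, l) \<in> \<nu>" by blast
      then have "l \<le> n" using nr_range[OF N l(2)] by simp
      moreover have "(Suc x, Suc (l - 1)) \<in> \<nu>" using l by simp
      ultimately show "\<exists>l<n. y \<le> l \<and> NU c t x l" using l NUiff by (intro exI[of _ "l - 1"]) auto
    next
      assume "\<exists>l<n. y \<le> l \<and> NU c t x l"
      then show "\<exists>l. Suc y \<le> l \<and> (Suc x, l) \<in> \<nu>" using NUiff by auto
    qed
    then show ?thesis using A[OF that] by simp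
  qed
  show ?thesis
    unfolding t_def[symmetric] thetaS_def Let_def lt
  proof (intro conjI allI impI)
    fix x y y' assume "x < n" "y < n" "y' < n" "NU c t x y \<and> NU c t x y'"
    then show "y = y'" using nr_fun[OF N, of "Suc x" "Suc y" "Suc y'"] NUiff by auto
  next
    fix x x' assume "x < n" "x' < n" "\<exists>y<n. NU c t x y \<and> NU c t x' y"
    then show "x = x'" using nr_inj[OF N, of "Suc x" _ "Suc x'"] NUiff by auto
  next
    fix x y x' y' assume "x < n" "y < n" "x' < n" "y' < n" "NU c t x y \<and> NU c t x' y' \<and> x < x'"
    then show "y < x' \<or> y' < y" using nr_nest[OF N, of "Suc x" "Suc y" "Suc x'" "Suc y'"] NUiff by auto
  next
    fix x y assume "x < n" "y < n" "x < y"
    then show "(Ps c t x y \<noteq> (0 < x \<and> Ps c t (x - 1) y)) = (\<exists>l<n. y \<le> l \<and> NU c t x l)"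
      using T4 by blast
  qed
qed

definition nu_of :: "bool \<Rightarrow> 'a txt_term \<Rightarrow> (nat \<times> nat) set" where
  "nu_of c t = {(Suc x, Suc y) | x y. NU c t x y}"

lemma theta_inverse:
  assumes th: "thetaS c t"
  shows "is_nw (leaves t) (nu_of c t) \<and> text_of (Phi c (leaves t) (nu_of c t)) = text_of t"
proof -
  define n where "n = length (leaves t)"
  define \<nu> where "\<nu> = nu_of c t"
  have NUb: "NU c t x y \<Longrightarrow> x < y \<and> y < n" for x y unfolding NU_def n_def by auto
  have mem: "(a, b) \<in> \<nu> \<longleftrightarrow> (\<exists>x y. a = Suc x \<and> b = Suc y \<and> NU c t x y)" for a b
    unfolding \<nu>_def nu_of_def by auto
  have th': "(\<forall>x<n. \<forall>y<n. \<forall>y'<n. NU c t x y \<and> NU c t x y' \<longrightarrow> y = y') \<and>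
    (\<forall>x<n. \<forall>x'<n. (\<exists>y<n. NU c t x y \<and> NU c t x' y) \<longrightarrow> x = x') \<and>
    (\<forall>x<n. \<forall>y<n. \<forall>x'<n. \<forall>y'<n. NU c t x y \<and> NU c t x' y' \<and> x < x' \<longrightarrow> y < x' \<or> y' < y) \<and>
    (\<forall>x<n. \<forall>y<n. x < y \<longrightarrow>
       ((Ps c t x y \<noteq> (0 < x \<and> Ps c t (x - 1) y)) \<longleftrightarrow> (\<exists>l<n. y \<le> l \<and> NU c t x l)))"
    using th unfolding thetaS_def Let_def n_def by blast
  note th1 = th'[THEN conjunct1, rule_format]
  note th2 = th'[THEN conjunct2, THEN conjunct1, rule_format]
  note th3 = th'[THEN conjunct2, THEN conjunct2, THEN conjunct1, rule_format]
  note th4 = th'[THEN conjunct2, THEN conjunct2, THEN conjunct2, rule_format]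
  have N: "nesting_rel n \<nu>"
    unfolding nesting_rel_def
  proof (intro conjI allI impI)
    show "\<nu> \<subseteq> {1..n} \<times> {1..n}" using NUb mem by force
  next
    fix i j assume "(i, j) \<in> \<nu>" then show "i < j" using NUb mem by force
  next
    fix i j j' assume "(i, j) \<in> \<nu>" "(i, j') \<in> \<nu>"
    then obtain x y y' where "i = Suc x" "j = Suc y" "j' = Suc y'" "NU c t x y" "NU c t x y'" using mem by force
    then show "j = j'" using th1[of x y y'] NUb[of x y] NUb[of x y'] by auto
  next
    fix i i' j assume "(i, j) \<in> \<nu>" "(i', j) \<in> \<nu>"
    then obtain x x' y where "i = Suc x" "i' = Suc x'" "j = Suc y" "NU c t x y" "NU c t x' y" using mem by force
    then show "i = i'" using th2[of x x'] NUb[of x y] NUb[of x' y] by auto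
  next
    fix i j i' j' assume "(i, j) \<in> \<nu>" "(i', j') \<in> \<nu>" "i < i'"
    then obtain x y x' y' where "i = Suc x" "j = Suc y" "i' = Suc x'" "j' = Suc y'" "NU c t x y" "NU c t x' y'"
      using mem by force
    moreover have "y < x' \<or> y' < y" using th3[of x y x' y'] NUb[of x y] NUb[of x' y'] calculation \<open>i < i'\<close> by auto
    ultimately show "j < i' \<or> j' < j" by simp
  qed
  have Aeq: "(\<exists>l. Suc y \<le> l \<and> (Suc x, l) \<in> \<nu>) = (\<exists>l<n. y \<le> l \<and> NU c t x l)" for x y
  proof
    assume "\<exists>l. Suc y \<le> l \<and> (Suc x, l) \<in> \<nu>"
    then obtain l where "Suc y \<le> l" "(Suc x, l) \<in> \<nu>" by blast
    then obtain l' where "l = Suc l'" "NU c t x l'" using mem by force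
    then show "\<exists>l<n. y \<le> l \<and> NU c t x l" using \<open>Suc y \<le> l\<close> NUb by auto
  next
    assume "\<exists>l<n. y \<le> l \<and> NU c t x l"
    then obtain l where "y \<le> l" "NU c t x l" by blast
    then have "Suc y \<le> Suc l" "(Suc x, Suc l) \<in> \<nu>" using mem by auto
    then show "\<exists>l. Suc y \<le> l \<and> (Suc x, l) \<in> \<nu>" by blast
  qed
  have par: "\<forall>y. x < y \<longrightarrow> y < n \<longrightarrow> Ps c t x y = odd (ecount \<nu> (Suc x) (Suc y))" for x
  proof (induction x)
    case 0
    show ?case
    proof (intro allI impI)
      fix y assume "0 < y" "y < n"
      then have "(Ps c t 0 y \<noteq> False) = (\<exists>l<n. y \<le> l \<and> NU c t 0 l)" using th4[of 0 y] by auto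
      then show "Ps c t 0 y = odd (ecount \<nu> (Suc 0) (Suc y))"
        using ecount_sx[OF N, of 0 "Suc y"] ecount_0[OF N] Aeq[of y 0] by simp
    qed
  next
    case (Suc x)
    show ?case
    proof (intro allI impI)
      fix y assume "Suc x < y" "y < n"
      then have "(Ps c t (Suc x) y \<noteq> Ps c t x y) = (\<exists>l<n. y \<le> l \<and> NU c t (Suc x) l)" using th4[of "Suc x" y] by auto
      moreover have "Ps c t x y = odd (ecount \<nu> (Suc x) (Suc y))" using Suc.IH \<open>Suc x < y\<close> \<open>y < n\<close> by simp
      moreover have "ecount \<nu> (Suc (Suc x)) (Suc y) = ecount \<nu> (Suc x) (Suc y) +
          (if \<exists>l<n. y \<le> l \<and> NU c t (Suc x) l then 1 else 0)"
        using ecount_sx[OF N, of "Suc x" "Suc y"] Aeq[of y "Suc x"] by simp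
      ultimately show "Ps c t (Suc x) y = odd (ecount \<nu> (Suc (Suc x)) (Suc y))"
        by (cases "\<exists>l<n. y \<le> l \<and> NU c t (Suc x) l") auto
    qed
  qed
  have nw: "is_nw (leaves t) \<nu>" unfolding is_nw_def using N leaves_ne n_def by simp
  have PP: "leaves (Phi c (leaves t) \<nu>) = leaves t \<and> (\<forall>x y. x < y \<longrightarrow> y < n \<longrightarrow>
     sw (Phi c (leaves t) \<nu>) x y = (odd (ecount \<nu> (Suc x) (Suc y)) = c))"
    using Phi_props[OF nw, of c] n_def by simp
  have "text_of (Phi c (leaves t) \<nu>) = text_of t"
  proof (rule text_of_eq)
    show "leaves (Phi c (leaves t) \<nu>) = leaves t" using PP by simp
  next
    fix x y assume xy: "x < y" "y < length (leaves (Phi c (leaves t) \<nu>))"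
    then have xy': "x < y" "y < n" using PP n_def by auto
    show "sw (Phi c (leaves t) \<nu>) x y = sw t x y"
      using PP xy' par[of x] Ps_sw[of x y t c] n_def by auto
  qed
  then show ?thesis using nw unfolding \<nu>_def by simp
qed




lemma sat_iso:
  assumes bij: "bij_betw f (sdom A) (sdom B)" and rel: "\<forall>R. srel B R = map f ` srel A R"
    and wfA: "\<forall>R. \<forall>vs\<in>srel A R. set vs \<subseteq> sdom A"
  shows "is_FO \<phi> \<Longrightarrow> (\<forall>x\<in>fv1 \<phi>. fo x \<in> sdom A \<and> fo' x = f (fo x)) \<Longrightarrow>
    (\<forall>X. so X \<subseteq> sdom A) \<Longrightarrow> sat B fo' (\<lambda>X. f ` so X) \<phi> = sat A fo so \<phi>"
proof (induction \<phi> arbitrary: fo fo')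
  have inj: "inj_on f (sdom A)" using bij bij_betw_imp_inj_on by blast
  {
    case (Rel R xs)
    have m: "map fo' xs = map f (map fo xs)" using Rel.prems(2) by auto
    have s: "set (map fo xs) \<subseteq> sdom A" using Rel.prems(2) by auto
    show ?case
    proof
      assume "sat B fo' (\<lambda>X. f ` so X) (Rel R xs)"
      then have "map f (map fo xs) \<in> map f ` srel A R" using m rel by simp
      then obtain vs where vs: "vs \<in> srel A R" "map f (map fo xs) = map f vs" by auto
      have "set vs \<subseteq> sdom A" using wfA vs(1) by blast
      then have "map fo xs = vs" using map_inj_on[OF vs(2)] inj s by (meson inj_on_subset le_sup_iff)
      then show "sat A fo so (Rel R xs)" using vs by simp
    next
      assume "sat A fo so (Rel R xs)"
      then have "map f (map fo xs) \<in> map f ` srel A R" by (intro imageI) simp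
      then have "map fo' xs \<in> map f ` srel A R" unfolding m .
      then show "sat B fo' (\<lambda>X. f ` so X) (Rel R xs)" using rel by simp
    qed
  next
    case (Eq x y)
    then show ?case using inj by (auto simp: inj_on_eq_iff)
  next
    case (Mem x X)
    then show ?case using inj by (auto simp: inj_on_image_mem_iff)
  next
    case (Neg \<phi>)
    then show ?case by simp
  next
    case (Conj \<phi> \<psi>)
    have h1: "sat B fo' (\<lambda>X. f ` so X) \<phi> = sat A fo so \<phi>" using Conj.IH(1)[of fo fo'] Conj.prems by simp
    have h2: "sat B fo' (\<lambda>X. f ` so X) \<psi> = sat A fo so \<psi>" using Conj.IH(2)[of fo fo'] Conj.prems by simp
    show ?case using h1 h2 by simp
  next
    case (Ex1 x \<phi>)
    have IH: "sat B (fo'(x := f u)) (\<lambda>X. f ` so X) \<phi> = sat A (fo(x := u)) so \<phi>" if "u \<in> sdom A" for u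
    proof -
      have pre: "\<forall>y\<in>fv1 \<phi>. (fo(x := u)) y \<in> sdom A \<and> (fo'(x := f u)) y = f ((fo(x := u)) y)"
        using Ex1.prems(2) that by auto
      have "is_FO \<phi>" using Ex1.prems(1) by simp
      then show ?thesis using Ex1.IH[of "fo(x := u)" "fo'(x := f u)"] pre Ex1.prems(3) by blast
    qed
    have surj: "f ` sdom A = sdom B" using bij bij_betw_imp_surj_on by blast
    show ?case
    proof
      assume "sat B fo' (\<lambda>X. f ` so X) (Ex1 x \<phi>)"
      then obtain v where v: "v \<in> sdom B" "sat B (fo'(x := v)) (\<lambda>X. f ` so X) \<phi>" by auto
      then obtain u where "u \<in> sdom A" "v = f u" using surj by blast
      then show "sat A fo so (Ex1 x \<phi>)" using IH v by auto
    next
      assume "sat A fo so (Ex1 x \<phi>)"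
      then obtain u where u: "u \<in> sdom A" "sat A (fo(x := u)) so \<phi>" by auto
      then have "f u \<in> sdom B" using surj by blast
      then show "sat B fo' (\<lambda>X. f ` so X) (Ex1 x \<phi>)" using IH u by auto
    qed
  next
    case (Ex2 X \<phi>)
    then show ?case by simp
  }
qed

lemma def_str_iso:
  assumes bij: "bij_betw f (sdom A) (sdom B)" and rel: "\<forall>R. srel B R = map f ` srel A R"
    and wfA: "\<forall>R. \<forall>vs\<in>srel A R. set vs \<subseteq> sdom A"
    and FO: "FO_scheme D" and wfD: "wf_scheme ar2 D"
  shows "sdom (def_str ar2 D B []) = f ` sdom (def_str ar2 D A [])"
    "srel (def_str ar2 D B []) R = map f ` srel (def_str ar2 D A []) R"
proof -
  have inj: "inj_on f (sdom A)" using bij bij_betw_imp_inj_on by blast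
  have surj: "f ` sdom A = sdom B" using bij bij_betw_imp_surj_on by blast
  have pa: "par_asg [] = (\<lambda>_. {})" by (simp add: par_asg_def)
  define VA where "VA = {v \<in> sdom A. sat A (\<lambda>_. v) (\<lambda>_. {}) (ddelta D)}"
  define VB where "VB = {v \<in> sdom B. sat B (\<lambda>_. v) (\<lambda>_. {}) (ddelta D)}"
  have dl: "sat B (\<lambda>_. f u) (\<lambda>_. {}) (ddelta D) = sat A (\<lambda>_. u) (\<lambda>_. {}) (ddelta D)" if "u \<in> sdom A" for u
    using sat_iso[OF bij rel wfA, of "ddelta D" "\<lambda>_. u" "\<lambda>_. f u" "\<lambda>_. {}"] FO that
    unfolding FO_scheme_def by simp
  have VAB: "VB = f ` VA"
  proof
    show "VB \<subseteq> f ` VA"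
    proof
      fix v assume "v \<in> VB"
      then have v: "v \<in> sdom B" "sat B (\<lambda>_. v) (\<lambda>_. {}) (ddelta D)" by (auto simp: VB_def)
      then obtain u where "u \<in> sdom A" "v = f u" using surj by blast
      then show "v \<in> f ` VA" unfolding VA_def using dl v by auto
    qed
  next
    show "f ` VA \<subseteq> VB" unfolding VA_def VB_def using dl surj by auto
  qed
  have VAsub: "VA \<subseteq> sdom A" unfolding VA_def by auto
  show "sdom (def_str ar2 D B []) = f ` sdom (def_str ar2 D A [])"
    unfolding def_str_def Let_def pa using VAB unfolding VA_def VB_def by simp
  have phi: "sat B (\<lambda>i. map f us ! i) (\<lambda>_. {}) (dphi D R) = sat A (\<lambda>i. us ! i) (\<lambda>_. {}) (dphi D R)"
    if "length us = ar2 R" "set us \<subseteq> sdom A" for us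
  proof -
    have "is_FO (dphi D R)" using FO unfolding FO_scheme_def by blast
    moreover have "\<forall>x\<in>fv1 (dphi D R). us ! x \<in> sdom A \<and> map f us ! x = f (us ! x)"
    proof
      fix x assume "x \<in> fv1 (dphi D R)"
      then have "x < ar2 R" using wfD unfolding wf_scheme_def by blast
      then show "us ! x \<in> sdom A \<and> map f us ! x = f (us ! x)" using that by auto
    qed
    ultimately show ?thesis using sat_iso[OF bij rel wfA, of "dphi D R" "\<lambda>i. us ! i" "\<lambda>i. map f us ! i" "\<lambda>_. {}"] by simp
  qed
  have "{vs. length vs = ar2 R \<and> set vs \<subseteq> VB \<and> sat B (\<lambda>i. vs ! i) (\<lambda>_. {}) (dphi D R)} =
        map f ` {vs. length vs = ar2 R \<and> set vs \<subseteq> VA \<and> sat A (\<lambda>i. vs ! i) (\<lambda>_. {}) (dphi D R)}"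
  proof
    show "{vs. length vs = ar2 R \<and> set vs \<subseteq> VB \<and> sat B (\<lambda>i. vs ! i) (\<lambda>_. {}) (dphi D R)} \<subseteq>
        map f ` {vs. length vs = ar2 R \<and> set vs \<subseteq> VA \<and> sat A (\<lambda>i. vs ! i) (\<lambda>_. {}) (dphi D R)}"
    proof
      fix vs assume vs: "vs \<in> {vs. length vs = ar2 R \<and> set vs \<subseteq> VB \<and> sat B (\<lambda>i. vs ! i) (\<lambda>_. {}) (dphi D R)}"
      define us where "us = map (inv_into (sdom A) f) vs"
      have sv: "set vs \<subseteq> f ` VA" using vs VAB by auto
      have mus: "map f us = vs" unfolding us_def map_map
      proof (rule map_idI)
        fix y assume "y \<in> set vs"
        then have "y \<in> f ` sdom A" using sv VAsub by blast
        then show "(f \<circ> inv_into (sdom A) f) y = y" by (simp add: f_inv_into_f)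
      qed
      have sus: "set us \<subseteq> VA" unfolding us_def using sv VAsub inj
        by (auto simp: inv_into_f_f subsetD)
      have "length us = ar2 R" using vs unfolding us_def by simp
      then have "sat A (\<lambda>i. us ! i) (\<lambda>_. {}) (dphi D R)" using phi[of us] sus VAsub vs mus by auto
      then show "vs \<in> map f ` {vs. length vs = ar2 R \<and> set vs \<subseteq> VA \<and> sat A (\<lambda>i. vs ! i) (\<lambda>_. {}) (dphi D R)}"
        using mus sus \<open>length us = ar2 R\<close> by (intro image_eqI[of _ _ us]) auto
    qed
  next
    show "map f ` {vs. length vs = ar2 R \<and> set vs \<subseteq> VA \<and> sat A (\<lambda>i. vs ! i) (\<lambda>_. {}) (dphi D R)} \<subseteq>
      {vs. length vs = ar2 R \<and> set vs \<subseteq> VB \<and> sat B (\<lambda>i. vs ! i) (\<lambda>_. {}) (dphi D R)}"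
    proof
      fix vs assume "vs \<in> map f ` {vs. length vs = ar2 R \<and> set vs \<subseteq> VA \<and> sat A (\<lambda>i. vs ! i) (\<lambda>_. {}) (dphi D R)}"
      then obtain us where us: "vs = map f us" "length us = ar2 R" "set us \<subseteq> VA" "sat A (\<lambda>i. us ! i) (\<lambda>_. {}) (dphi D R)"
        by auto
      then show "vs \<in> {vs. length vs = ar2 R \<and> set vs \<subseteq> VB \<and> sat B (\<lambda>i. vs ! i) (\<lambda>_. {}) (dphi D R)}"
        using phi[of us] VAsub VAB by auto
    qed
  qed
  then show "srel (def_str ar2 D B []) R = map f ` srel (def_str ar2 D A []) R"
    unfolding def_str_def Let_def pa VA_def[symmetric] VB_def[symmetric] by simp
qed




lemma wf_text: "\<forall>R. \<forall>vs\<in>srel (text_of t) R. set vs \<subseteq> sdom (text_of t)"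
proof (intro allI ballI)
  fix R vs assume vs: "vs \<in> srel (text_of t) R"
  show "set vs \<subseteq> sdom (text_of t)"
  proof (cases R)
    case (TLab a) then show ?thesis using vs by (auto simp: text_of_simps)
  next
    case Ord1 then show ?thesis using vs by (auto simp: text_of_simps)
  next
    case Ord2
    then obtain a b where ab: "vs = [a, b]" using vs Ord2_mem by blast
    then have "a < length (leaves t) \<and> b < length (leaves t)" using vs Ord2 Ord2_iff by metis
    then show ?thesis using ab by (auto simp: text_of_simps)
  qed
qed

definition theD :: "bool \<Rightarrow> ('a txt_sym, 'a nw_sym) defscheme" where
  "theD c = \<lparr>nparams = 0, dtheta = theta c, ddelta = Eq 0 0,
     dphi = (\<lambda>R. case R of NLab a \<Rightarrow> Rel (TLab a) [0] | NLe \<Rightarrow> Rel Ord1 [0, 1] | NNu \<Rightarrow> nuf c 0 1)\<rparr>"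

lemma theD_wf: "wf_scheme nw_ar (theD c)"
  unfolding wf_scheme_def theD_def by (auto simp: fv1_theta fv1_nuf split: nw_sym.split)

lemma theD_FO: "FO_scheme (theD c)"
  unfolding FO_scheme_def theD_def by (auto split: nw_sym.split)

lemma theD_unamb: "unambiguous ar1 nw_ar (theD c)"
  unfolding unambiguous_def params_ok_def theD_def by simp

lemma list1: "length vs = Suc 0 \<longleftrightarrow> (\<exists>a. vs = [a])"
  by (cases vs) auto
lemma list2: "length vs = 2 \<longleftrightarrow> (\<exists>a b. vs = [a, b])"
  by (auto simp: numeral_2_eq_2 length_Suc_conv)

lemma DT_dom: "sdom (def_str nw_ar (theD c) (text_of t) []) = {0..<length (leaves t)}"
  unfolding def_str_def theD_def Let_def by (auto simp: text_of_simps)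

lemma DT_rel: "srel (def_str nw_ar (theD c) (text_of t) []) R =
    map (\<lambda>i. i - 1) ` srel (nw_struct (leaves t) (nu_of c t)) R"
proof -
  define n where "n = length (leaves t)"
  have L: "srel (def_str nw_ar (theD c) (text_of t) []) R =
     {vs. length vs = nw_ar R \<and> set vs \<subseteq> {0..<n} \<and> sat (text_of t) (\<lambda>i. vs ! i) (par_asg [])
        (case R of NLab a \<Rightarrow> Rel (TLab a) [0] | NLe \<Rightarrow> Rel Ord1 [0, Suc 0] | NNu \<Rightarrow> nuf c 0 (Suc 0))}"
    unfolding def_str_def theD_def Let_def n_def by (auto simp: text_of_simps)
  have simg: "map (\<lambda>i. i - 1) ` (f ` S) = (\<lambda>x. map (\<lambda>i. i - 1) (f x)) ` S" for f :: "'b \<Rightarrow> nat list" and S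
    by (simp add: image_image)
  show ?thesis
  proof (cases R)
    case (NLab a)
    have "srel (def_str nw_ar (theD c) (text_of t) []) R = (\<lambda>j. [j]) ` {j. j < n \<and> leaves t ! j = a}"
      unfolding L unfolding NLab
    proof (rule set_eqI)
      fix vs :: "nat list"
      show "vs \<in> {vs. length vs = nw_ar (NLab a) \<and> set vs \<subseteq> {0..<n} \<and> sat (text_of t) ((!) vs) (par_asg [])
          (case NLab a of NLab a \<Rightarrow> Rel (TLab a) [0] | NLe \<Rightarrow> Rel Ord1 [0, Suc 0] | NNu \<Rightarrow> nuf c 0 (Suc 0))} \<longleftrightarrow>
        vs \<in> (\<lambda>j. [j]) ` {j. j < n \<and> leaves t ! j = a}"
      proof
        assume "vs \<in> {vs. length vs = nw_ar (NLab a) \<and> set vs \<subseteq> {0..<n} \<and> sat (text_of t) ((!) vs) (par_asg [])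
          (case NLab a of NLab a \<Rightarrow> Rel (TLab a) [0] | NLe \<Rightarrow> Rel Ord1 [0, Suc 0] | NNu \<Rightarrow> nuf c 0 (Suc 0))}"
        then have H: "length vs = Suc 0" "[vs ! 0] \<in> srel (text_of t) (TLab a)" by simp_all
        obtain v where v: "vs = [v]" using list1[THEN iffD1, OF H(1)] by blast
        then show "vs \<in> (\<lambda>j. [j]) ` {j. j < n \<and> leaves t ! j = a}" using H by (auto simp: text_of_simps n_def)
      next
        assume "vs \<in> (\<lambda>j. [j]) ` {j. j < n \<and> leaves t ! j = a}"
        then obtain v where "vs = [v]" "v < n" "leaves t ! v = a" by auto
        then show "vs \<in> {vs. length vs = nw_ar (NLab a) \<and> set vs \<subseteq> {0..<n} \<and> sat (text_of t) ((!) vs) (par_asg [])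
          (case NLab a of NLab a \<Rightarrow> Rel (TLab a) [0] | NLe \<Rightarrow> Rel Ord1 [0, Suc 0] | NNu \<Rightarrow> nuf c 0 (Suc 0))}"
          by (auto simp: text_of_simps n_def)
      qed
    qed
    moreover have "srel (nw_struct (leaves t) (nu_of c t)) R = (\<lambda>j. [Suc j]) ` {j. j < n \<and> leaves t ! j = a}"
      unfolding NLab nw_struct_def n_def
    proof (rule set_eqI)
      fix vs :: "nat list"
      show "vs \<in> srel \<lparr>sdom = {1..length (leaves t)}, srel = \<lambda>R. case R of NLab a \<Rightarrow> {[i] |i. 1 \<le> i \<and> i \<le> length (leaves t) \<and> leaves t ! (i - 1) = a}
         | NLe \<Rightarrow> {[i, j] |i j. 1 \<le> i \<and> i \<le> j \<and> j \<le> length (leaves t)} | NNu \<Rightarrow> {[i, j] |i j. (i, j) \<in> nu_of c t}\<rparr> (NLab a) \<longleftrightarrow>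
          vs \<in> (\<lambda>j. [Suc j]) ` {j. j < length (leaves t) \<and> leaves t ! j = a}"
      proof
        assume "vs \<in> srel \<lparr>sdom = {1..length (leaves t)}, srel = \<lambda>R. case R of NLab a \<Rightarrow> {[i] |i. 1 \<le> i \<and> i \<le> length (leaves t) \<and> leaves t ! (i - 1) = a}
         | NLe \<Rightarrow> {[i, j] |i j. 1 \<le> i \<and> i \<le> j \<and> j \<le> length (leaves t)} | NNu \<Rightarrow> {[i, j] |i j. (i, j) \<in> nu_of c t}\<rparr> (NLab a)"
        then obtain i where i: "vs = [i]" "1 \<le> i" "i \<le> length (leaves t)" "leaves t ! (i - 1) = a" by auto
        then have "vs = [Suc (i - 1)]" by simp
        then show "vs \<in> (\<lambda>j. [Suc j]) ` {j. j < length (leaves t) \<and> leaves t ! j = a}"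
          using i by (intro image_eqI[of _ _ "i - 1"]) auto
      qed auto
    qed
    ultimately show ?thesis by (simp add: image_image)
  next
    case NLe
    have "srel (def_str nw_ar (theD c) (text_of t) []) R = (\<lambda>(i, j). [i, j]) ` {(i, j). i \<le> j \<and> j < n}"
      unfolding L unfolding NLe
    proof (rule set_eqI)
      fix vs :: "nat list"
      show "vs \<in> {vs. length vs = nw_ar NLe \<and> set vs \<subseteq> {0..<n} \<and> sat (text_of t) ((!) vs) (par_asg [])
          (case NLe of NLab a \<Rightarrow> Rel (TLab a) [0] | NLe \<Rightarrow> Rel Ord1 [0, Suc 0] | NNu \<Rightarrow> nuf c 0 (Suc 0))} \<longleftrightarrow>
        vs \<in> (\<lambda>(i, j). [i, j]) ` {(i, j). i \<le> j \<and> j < n}"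
      proof
        assume "vs \<in> {vs. length vs = nw_ar NLe \<and> set vs \<subseteq> {0..<n} \<and> sat (text_of t) ((!) vs) (par_asg [])
          (case NLe of NLab a \<Rightarrow> Rel (TLab a) [0] | NLe \<Rightarrow> Rel Ord1 [0, Suc 0] | NNu \<Rightarrow> nuf c 0 (Suc 0))}"
        then have H: "length vs = 2" "[vs ! 0, vs ! 1] \<in> srel (text_of t) Ord1" by simp_all
        obtain a b where v: "vs = [a, b]" using list2[THEN iffD1, OF H(1)] by blast
        then have "a \<le> b \<and> b < n" using H by (auto simp: text_of_simps n_def)
        then show "vs \<in> (\<lambda>(i, j). [i, j]) ` {(i, j). i \<le> j \<and> j < n}" using v by (intro image_eqI[of _ _ "(a, b)"]) auto
      next
        assume "vs \<in> (\<lambda>(i, j). [i, j]) ` {(i, j). i \<le> j \<and> j < n}"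
        then obtain a b where "vs = [a, b]" "a \<le> b" "b < n" by auto
        then show "vs \<in> {vs. length vs = nw_ar NLe \<and> set vs \<subseteq> {0..<n} \<and> sat (text_of t) ((!) vs) (par_asg [])
          (case NLe of NLab a \<Rightarrow> Rel (TLab a) [0] | NLe \<Rightarrow> Rel Ord1 [0, Suc 0] | NNu \<Rightarrow> nuf c 0 (Suc 0))}"
          by (auto simp: text_of_simps n_def)
      qed
    qed
    moreover have "srel (nw_struct (leaves t) (nu_of c t)) R = (\<lambda>(i, j). [Suc i, Suc j]) ` {(i, j). i \<le> j \<and> j < n}"
      unfolding NLe nw_struct_def n_def
    proof (rule set_eqI)
      fix vs :: "nat list"
      show "vs \<in> srel \<lparr>sdom = {1..length (leaves t)}, srel = \<lambda>R. case R of NLab a \<Rightarrow> {[i] |i. 1 \<le> i \<and> i \<le> length (leaves t) \<and> leaves t ! (i - 1) = a}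
         | NLe \<Rightarrow> {[i, j] |i j. 1 \<le> i \<and> i \<le> j \<and> j \<le> length (leaves t)} | NNu \<Rightarrow> {[i, j] |i j. (i, j) \<in> nu_of c t}\<rparr> NLe \<longleftrightarrow>
          vs \<in> (\<lambda>(i, j). [Suc i, Suc j]) ` {(i, j). i \<le> j \<and> j < length (leaves t)}"
      proof
        assume "vs \<in> srel \<lparr>sdom = {1..length (leaves t)}, srel = \<lambda>R. case R of NLab a \<Rightarrow> {[i] |i. 1 \<le> i \<and> i \<le> length (leaves t) \<and> leaves t ! (i - 1) = a}
         | NLe \<Rightarrow> {[i, j] |i j. 1 \<le> i \<and> i \<le> j \<and> j \<le> length (leaves t)} | NNu \<Rightarrow> {[i, j] |i j. (i, j) \<in> nu_of c t}\<rparr> NLe"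
        then obtain i j where i: "vs = [i, j]" "1 \<le> i" "i \<le> j" "j \<le> length (leaves t)" by auto
        then have "vs = [Suc (i - 1), Suc (j - 1)]" by simp
        then show "vs \<in> (\<lambda>(i, j). [Suc i, Suc j]) ` {(i, j). i \<le> j \<and> j < length (leaves t)}"
          using i by (intro image_eqI[of _ _ "(i - 1, j - 1)"]) auto
      qed auto
    qed
    ultimately show ?thesis by (auto simp add: image_image intro!: image_cong)
  next
    case NNu
    have "srel (def_str nw_ar (theD c) (text_of t) []) R = (\<lambda>(i, j). [i, j]) ` {(i, j). NU c t i j}"
      unfolding L unfolding NNu
    proof (rule set_eqI)
      fix vs :: "nat list"
      show "vs \<in> {vs. length vs = nw_ar NNu \<and> set vs \<subseteq> {0..<n} \<and> sat (text_of t) ((!) vs) (par_asg [])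
          (case NNu of NLab a \<Rightarrow> Rel (TLab a) [0] | NLe \<Rightarrow> Rel Ord1 [0, Suc 0] | NNu \<Rightarrow> nuf c 0 (Suc 0))} \<longleftrightarrow>
        vs \<in> (\<lambda>(i, j). [i, j]) ` {(i, j). NU c t i j}"
      proof
        assume "vs \<in> {vs. length vs = nw_ar NNu \<and> set vs \<subseteq> {0..<n} \<and> sat (text_of t) ((!) vs) (par_asg [])
          (case NNu of NLab a \<Rightarrow> Rel (TLab a) [0] | NLe \<Rightarrow> Rel Ord1 [0, Suc 0] | NNu \<Rightarrow> nuf c 0 (Suc 0))}"
        then have H: "length vs = 2" "NU c t (vs ! 0) (vs ! 1)" by simp_all
        obtain a b where v: "vs = [a, b]" using list2[THEN iffD1, OF H(1)] by blast
        then show "vs \<in> (\<lambda>(i, j). [i, j]) ` {(i, j). NU c t i j}" using H by (intro image_eqI[of _ _ "(a, b)"]) auto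
      next
        assume "vs \<in> (\<lambda>(i, j). [i, j]) ` {(i, j). NU c t i j}"
        then obtain a b where "vs = [a, b]" "NU c t a b" by auto
        moreover then have "a < n" "b < n" unfolding NU_def n_def by auto
        ultimately show "vs \<in> {vs. length vs = nw_ar NNu \<and> set vs \<subseteq> {0..<n} \<and> sat (text_of t) ((!) vs) (par_asg [])
          (case NNu of NLab a \<Rightarrow> Rel (TLab a) [0] | NLe \<Rightarrow> Rel Ord1 [0, Suc 0] | NNu \<Rightarrow> nuf c 0 (Suc 0))}"
          by auto
      qed
    qed
    moreover have "srel (nw_struct (leaves t) (nu_of c t)) R = (\<lambda>(i, j). [Suc i, Suc j]) ` {(i, j). NU c t i j}"
      unfolding NNu nw_struct_def nu_of_def by (auto simp: image_def)
    ultimately show ?thesis by (auto simp add: image_image intro!: image_cong)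
  qed
qed




lemma theta_transfer:
  assumes "iso_str (text_of t) s"
  shows "sat s fo (par_asg []) (theta c) = thetaS c t"
proof -
  obtain f where bij: "bij_betw f (sdom (text_of t)) (sdom s)" and rel: "\<forall>R. srel s R = map f ` srel (text_of t) R"
    using assms unfolding iso_str_def by blast
  have "sat s fo (\<lambda>X. f ` (\<lambda>_. {}) X) (theta c) = sat (text_of t) (\<lambda>_. 0) (\<lambda>_. {}) (theta c)"
    by (rule sat_iso[OF bij rel wf_text]) (auto simp: fv1_theta)
  then show ?thesis using sat_theta by (simp add: par_asg_def)
qed

lemma bij_pred: "bij_betw (\<lambda>i. i - 1) {1..n} {0..<(n::nat)}"
  unfolding bij_betw_def
proof
  show "inj_on (\<lambda>i. i - 1) {1..n}" unfolding inj_on_def by (auto; arith)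
  show "(\<lambda>i. i - 1) ` {1..n} = {0..<n}"
  proof
    show "(\<lambda>i. i - 1) ` {1..n} \<subseteq> {0..<n}" by auto
    show "{0..<n} \<subseteq> (\<lambda>i. i - 1) ` {1..n}"
    proof
      fix x assume "x \<in> {0..<n}"
      then show "x \<in> (\<lambda>i. i - 1) ` {1..n}" by (intro image_eqI[of _ _ "Suc x"]) auto
    qed
  qed
qed

theorem corollary5p6:
  fixes c :: bool
  shows "\<exists>D :: ('a::finite txt_sym, 'a nw_sym) defscheme.
     wf_scheme nw_ar D \<and> FO_scheme D \<and> unambiguous txt_ar nw_ar D \<and>
     (\<forall>s1 :: (nat, 'a txt_sym) str. s1 \<in> TXT \<longrightarrow>
        (\<forall>s2. def_rel nw_ar D s1 s2 \<longrightarrow>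
           (\<exists>w \<nu>. is_nw w \<nu> \<and> iso_str (text_of (Phi c w \<nu>)) s1 \<and> iso_str (nw_struct w \<nu>) s2)) \<and>
        ((\<exists>w \<nu>. is_nw w \<nu> \<and> iso_str (text_of (Phi c w \<nu>)) s1) \<longrightarrow>
           (\<exists>s2. def_rel nw_ar D s1 s2)))"
proof (intro exI[of _ "theD c"] conjI theD_wf theD_FO theD_unamb allI impI)
  fix s1 :: "(nat, 'a txt_sym) str"
  assume "s1 \<in> TXT"
  then obtain t :: "'a txt_term" where iso: "iso_str (text_of t) s1" unfolding TXT_def by blast
  obtain f where bij: "bij_betw f (sdom (text_of t)) (sdom s1)" and rel: "\<forall>R. srel s1 R = map f ` srel (text_of t) R"
    using iso unfolding iso_str_def by blast
  {
    fix s2 assume "def_rel nw_ar (theD c) s1 s2"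
    then obtain Ts where P: "params_ok (theD c) s1 Ts" and s2: "s2 = def_str nw_ar (theD c) s1 Ts"
      unfolding def_rel_def by blast
    have Ts: "Ts = []" using P unfolding params_ok_def theD_def by simp
    have "sat s1 (\<lambda>_. undefined) (par_asg []) (theta c)" using P Ts unfolding params_ok_def theD_def by simp
    then have th: "thetaS c t" using theta_transfer[OF iso] by simp
    define w where "w = leaves t"
    define \<nu> where "\<nu> = nu_of c t"
    define n where "n = length w"
    have inv: "is_nw w \<nu> \<and> text_of (Phi c w \<nu>) = text_of t" using theta_inverse[OF th] unfolding w_def \<nu>_def .
    have ds: "sdom s2 = f ` sdom (def_str nw_ar (theD c) (text_of t) [])"
      "\<And>R. srel s2 R = map f ` srel (def_str nw_ar (theD c) (text_of t) []) R"
      unfolding s2 Ts using def_str_iso[OF bij rel wf_text theD_FO theD_wf] by auto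
    have dom2: "sdom s2 = sdom s1" unfolding ds(1) DT_dom using bij_betw_imp_surj_on[OF bij]
      by (simp add: text_of_simps)
    have "iso_str (nw_struct w \<nu>) s2"
      unfolding iso_str_def
    proof (intro exI[of _ "f \<circ> (\<lambda>i. i - 1)"] conjI allI)
      have "bij_betw (\<lambda>i. i - 1) {1..n} (sdom (text_of t))" using bij_pred[of n] by (simp add: text_of_simps n_def w_def)
      then show "bij_betw (f \<circ> (\<lambda>i. i - 1)) (sdom (nw_struct w \<nu>)) (sdom s2)"
        using bij_betw_trans[OF _ bij] dom2 unfolding nw_struct_def n_def by auto
    next
      fix R
      show "srel s2 R = map (f \<circ> (\<lambda>i. i - 1)) ` srel (nw_struct w \<nu>) R"
        unfolding ds(2) DT_rel w_def \<nu>_def by (simp add: image_image map_map[symmetric] del: map_map)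
    qed
    then show "\<exists>w \<nu>. is_nw w \<nu> \<and> iso_str (text_of (Phi c w \<nu>)) s1 \<and> iso_str (nw_struct w \<nu>) s2"
      using inv iso by metis
  }
  {
    assume "\<exists>w \<nu>. is_nw w \<nu> \<and> iso_str (text_of (Phi c w \<nu>)) s1"
    then obtain w \<nu> where nw: "is_nw w \<nu>" and iso2: "iso_str (text_of (Phi c w \<nu>)) s1" by blast
    have "thetaS c (Phi c w \<nu>)" using image_theta[OF nw] .
    then have "sat s1 (\<lambda>_. undefined) (par_asg []) (theta c)" using theta_transfer[OF iso2] by simp
    then have "params_ok (theD c) s1 []" unfolding params_ok_def theD_def by simp
    then show "\<exists>s2. def_rel nw_ar (theD c) s1 s2" unfolding def_rel_def by blast
  }
qed


end
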